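(* Let $n\ge 1$ and let $IB_n^+\subset IB_n$ be the set of positive partial permutation braids. If $b_1,b_2\in IB_n^+$ induce the same partial permutation of their strings, i.e. $\tau_n(b_1)=\tau_n(b_2)$, then $b_1=b_2$. Moreover, for every $s\in I_n$ there exists $b\in IB_n^+$ with $\tau_n(b)=s$.
   Context: The inverse braid monoid $IB_n$ is the monoid of partial braids on $n$ strings: geometric braids on $n$ strings from which some (possibly none or all) strings have been deleted, considered up to isotopy; multiplication is stacking followed by removal of every arc that does not join the top and bottom planes. It is generated by the Artin generators $\sigma_i^{\pm1}$ ($1\le i\le n-1$) and $\epsilon$ (the trivial braid with the first string deleted). $I_n$ denotes the symmetric inverse monoid (the monoid of partial injections of $\{1,\dots,n\}$), and $\tau_n:IB_n\to I_n$ is the canonical homomorphism sending a partial braid to the partial permutation of $\{1,\dots,n\}$ given by its strings (start point $\mapsto$ end point). A positive partial braid is an element of $IB_n$ that can be written as a word in the generators $\sigma_i$ ($1\le i\le n-1$) and $\epsilon$ with no occurrence of any $\sigma_i^{-1}$. A positive partial permutation braid is a positive partial braid that can be drawn as a geometric positive partial braid in which every pair of strings crosses at most once. $IB_n^+$ denotes the set of positive partial permutation braids. *)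

theory Defs
  imports Main
begin

text \<open>
  A word in the generators sigma_i, sigma_i^-1 (1 <= i <= n-1) and epsilon is drawn
  as a diagram on n slots (positions 1..n, top to bottom reading left to right in the word).
  Strings are labelled by their start positions.  epsilon cuts the arc at slot 1; the string
  occupying slot 1 at that moment is killed (its arcs do not join top and bottom, so it is
  removed entirely).  The partial braid represented by a word is determined by the set A of
  start points of surviving strings, the set B of their end points, and the braid on the
  k = card A surviving strings (an element of the Artin braid group B_k, given by its
  standard presentation), obtained by deleting all killed strings.
\<close>

datatype gen = Sig nat | SigInv nat | Eps

definition valid_word :: "nat \<Rightarrow> gen list \<Rightarrow> bool" where
  "valid_word n w \<longleftrightarrow> (\<forall>g\<in>set w. case g of
       Sig i \<Rightarrow> 1 \<le> i \<and> i < n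
     | SigInv i \<Rightarrow> 1 \<le> i \<and> i < n
     | Eps \<Rightarrow> True)"

definition positive_word :: "gen list \<Rightarrow> bool" where
  "positive_word w \<longleftrightarrow> (\<forall>i. SigInv i \<notin> set w)"

text \<open>slot contents: slot \<Rightarrow> label of the string currently at that slot\<close>
definition sw :: "nat \<Rightarrow> (nat \<Rightarrow> nat) \<Rightarrow> (nat \<Rightarrow> nat)" where
  "sw i st = st(i := st (Suc i), Suc i := st i)"

fun killed :: "gen list \<Rightarrow> (nat \<Rightarrow> nat) \<Rightarrow> nat set" where
  "killed [] st = {}"
| "killed (Sig i # w) st = killed w (sw i st)"
| "killed (SigInv i # w) st = killed w (sw i st)"
| "killed (Eps # w) st = insert (st 1) (killed w st)"

definition live :: "nat \<Rightarrow> gen list \<Rightarrow> nat set" where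
  "live n w = {1..n} - killed w id"

text \<open>position at the bottom of the string starting at position p\<close>
fun track :: "gen list \<Rightarrow> nat \<Rightarrow> nat" where
  "track [] p = p"
| "track (Sig i # w) p = track w (if p = i then Suc i else if p = Suc i then i else p)"
| "track (SigInv i # w) p = track w (if p = i then Suc i else if p = Suc i then i else p)"
| "track (Eps # w) p = track w p"

definition tau :: "nat \<Rightarrow> gen list \<Rightarrow> (nat \<Rightarrow> nat option)" where
  "tau n w = (\<lambda>p. if p \<in> live n w then Some (track w p) else None)"

text \<open>the braid word on the surviving strings (letters (r, True) = sigma_r, (r, False) = sigma_r^-1)\<close>
fun red :: "nat set \<Rightarrow> gen list \<Rightarrow> (nat \<Rightarrow> nat) \<Rightarrow> (nat \<times> bool) list" where
  "red L [] st = []"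
| "red L (Sig i # w) st =
     (if st i \<in> L \<and> st (Suc i) \<in> L then [(card {p. 1 \<le> p \<and> p \<le> i \<and> st p \<in> L}, True)] else [])
     @ red L w (sw i st)"
| "red L (SigInv i # w) st =
     (if st i \<in> L \<and> st (Suc i) \<in> L then [(card {p. 1 \<le> p \<and> p \<le> i \<and> st p \<in> L}, False)] else [])
     @ red L w (sw i st)"
| "red L (Eps # w) st = red L w st"

inductive braid_eq :: "nat \<Rightarrow> (nat \<times> bool) list \<Rightarrow> (nat \<times> bool) list \<Rightarrow> bool" for k where
  refl: "braid_eq k u u"
| sym: "braid_eq k u v \<Longrightarrow> braid_eq k v u"
| trans: "braid_eq k u v \<Longrightarrow> braid_eq k v x \<Longrightarrow> braid_eq k u x"
| ctx: "braid_eq k u v \<Longrightarrow> braid_eq k (x @ u @ y) (x @ v @ y)"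
| inv: "1 \<le> i \<Longrightarrow> i < k \<Longrightarrow> braid_eq k [(i, b), (i, \<not> b)] []"
| comm: "1 \<le> i \<Longrightarrow> i + 1 < j \<Longrightarrow> j < k \<Longrightarrow>
           braid_eq k [(i, True), (j, True)] [(j, True), (i, True)]"
| braid: "1 \<le> i \<Longrightarrow> i + 1 < k \<Longrightarrow>
           braid_eq k [(i, True), (i + 1, True), (i, True)] [(i + 1, True), (i, True), (i + 1, True)]"

definition pb_eq :: "nat \<Rightarrow> gen list \<Rightarrow> gen list \<Rightarrow> bool" where
  "pb_eq n w1 w2 \<longleftrightarrow>
     live n w1 = live n w2 \<and>
     track w1 ` live n w1 = track w2 ` live n w2 \<and>
     braid_eq (card (live n w1)) (red (live n w1) w1 id) (red (live n w2) w2 id)"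

text \<open>pairs of labels of strings crossing at each sigma letter\<close>
fun crossings :: "gen list \<Rightarrow> (nat \<Rightarrow> nat) \<Rightarrow> (nat \<times> nat) list" where
  "crossings [] st = []"
| "crossings (Sig i # w) st = (st i, st (Suc i)) # crossings w (sw i st)"
| "crossings (SigInv i # w) st = (st i, st (Suc i)) # crossings w (sw i st)"
| "crossings (Eps # w) st = crossings w st"

definition crosses_at_most_once :: "nat \<Rightarrow> gen list \<Rightarrow> bool" where
  "crosses_at_most_once n w \<longleftrightarrow>
     (\<forall>a\<in>live n w. \<forall>b\<in>live n w. a \<noteq> b \<longrightarrow>
        length (filter (\<lambda>(x, y). {x, y} = {a, b}) (crossings w id)) \<le> 1)"

definition in_IBn_plus :: "nat \<Rightarrow> gen list \<Rightarrow> bool" where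
  "in_IBn_plus n w \<longleftrightarrow> (\<exists>w'. valid_word n w' \<and> positive_word w' \<and>
      crosses_at_most_once n w' \<and> pb_eq n w w')"

definition partial_perm :: "nat \<Rightarrow> (nat \<Rightarrow> nat option) \<Rightarrow> bool" where
  "partial_perm n s \<longleftrightarrow> dom s \<subseteq> {1..n} \<and> ran s \<subseteq> {1..n} \<and> inj_on s (dom s)"

end

theory Submission
  imports Defs
begin


definition swp :: "nat \<Rightarrow> nat list \<Rightarrow> nat list" where
  "swp r xs = xs[r - 1 := xs ! r, r := xs ! (r - 1)]"

fun runB :: "nat list \<Rightarrow> (nat \<times> bool) list \<Rightarrow> nat list" where
  "runB xs [] = xs"
| "runB xs (l # u) = runB (swp (fst l) xs) u"

definition pr :: "nat \<Rightarrow> nat list \<Rightarrow> nat set" where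
  "pr r xs = {xs ! (r - 1), xs ! r}"

fun clB :: "nat list \<Rightarrow> (nat \<times> bool) list \<Rightarrow> nat set list" where
  "clB xs [] = []"
| "clB xs (l # u) = pr (fst l) xs # clB (swp (fst l) xs) u"

definition before :: "nat list \<Rightarrow> nat \<Rightarrow> nat \<Rightarrow> bool" where
  "before xs a b \<longleftrightarrow> (\<exists>i j. i < j \<and> j < length xs \<and> xs ! i = a \<and> xs ! j = b)"

definition invs :: "nat list \<Rightarrow> nat list \<Rightarrow> nat set set" where
  "invs xs ys = {{a, b} | a b. before xs a b \<and> before ys b a}"

lemma length_swp[simp]: "length (swp r xs) = length xs"
  by (simp add: swp_def)

lemma swp_nth:
  assumes "1 \<le> r" "r < length xs"
  shows "swp r xs ! p = (if p = r - 1 then xs ! r else if p = r then xs ! (r - 1) else xs ! p)"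
  using assms by (auto simp: swp_def nth_list_update)

lemma set_swp: assumes "1 \<le> r" "r < length xs" shows "set (swp r xs) = set xs"
proof
  show "set (swp r xs) \<subseteq> set xs"
    using assms by (auto simp: swp_def dest!: subsetD[OF set_update_subset_insert])
  show "set xs \<subseteq> set (swp r xs)"
  proof
    fix x assume "x \<in> set xs"
    then obtain p where p: "p < length xs" "xs ! p = x" by (auto simp: in_set_conv_nth)
    define q where "q = (if p = r - 1 then r else if p = r then r - 1 else p)"
    have "q < length xs" "swp r xs ! q = x" using assms p by (auto simp: q_def swp_nth)
    then show "x \<in> set (swp r xs)" by (metis length_swp nth_mem)
  qed
qed

lemma distinct_swp: assumes "1 \<le> r" "r < length xs" "distinct xs" shows "distinct (swp r xs)"
  unfolding distinct_conv_nth
proof (intro allI impI)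
  fix i j assume "i < length (swp r xs)" "j < length (swp r xs)" "i \<noteq> j"
  then show "swp r xs ! i \<noteq> swp r xs ! j"
    using assms by (auto simp: swp_nth nth_eq_iff_index_eq)
qed

lemma before_set: "before xs a b \<Longrightarrow> a \<in> set xs \<and> b \<in> set xs"
  unfolding before_def by auto

lemma before_neq: "distinct xs \<Longrightarrow> before xs a b \<Longrightarrow> a \<noteq> b"
  unfolding before_def by (auto simp: nth_eq_iff_index_eq)

lemma before_asym: "distinct xs \<Longrightarrow> before xs a b \<Longrightarrow> \<not> before xs b a"
  unfolding before_def by (metis less_trans nth_eq_iff_index_eq order.asym)

lemma before_total: "a \<in> set xs \<Longrightarrow> b \<in> set xs \<Longrightarrow> a \<noteq> b \<Longrightarrow> before xs a b \<or> before xs b a"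
  unfolding before_def by (metis in_set_conv_nth linorder_neqE_nat)

lemma before_trans: "distinct xs \<Longrightarrow> before xs a b \<Longrightarrow> before xs b c \<Longrightarrow> before xs a c"
  unfolding before_def by (metis less_trans nth_eq_iff_index_eq)

lemma before_nth: "i < j \<Longrightarrow> j < length xs \<Longrightarrow> before xs (xs ! i) (xs ! j)"
  unfolding before_def by auto

lemma before_swp:
  assumes d: "distinct xs" and r: "1 \<le> r" "r < length xs"
  shows "before (swp r xs) a b \<longleftrightarrow>
    (before xs a b \<and> \<not> (a = xs ! (r - 1) \<and> b = xs ! r)) \<or> (a = xs ! r \<and> b = xs ! (r - 1))"
proof
  assume "before (swp r xs) a b"
  then obtain i j where ij: "i < j" "j < length xs" "swp r xs ! i = a" "swp r xs ! j = b"
    unfolding before_def by auto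
  define t where "t p = (if p = r - 1 then r else if p = r then r - 1 else p)" for p
  have tt: "swp r xs ! p = xs ! t p" for p using r by (simp add: swp_nth t_def)
  show "(before xs a b \<and> \<not> (a = xs ! (r - 1) \<and> b = xs ! r)) \<or> (a = xs ! r \<and> b = xs ! (r - 1))"
  proof (cases "i = r - 1 \<and> j = r")
    case True then show ?thesis using ij tt t_def by auto
  next
    case False
    have lt: "t i < t j" using False ij r unfolding t_def by auto
    have tl: "t j < length xs" using ij r unfolding t_def by auto
    have b1: "before xs a b" using lt tl ij tt unfolding before_def by metis
    have "\<not> (a = xs ! (r - 1) \<and> b = xs ! r)"
    proof
      assume h: "a = xs ! (r - 1) \<and> b = xs ! r"
      have "t i < length xs" using lt tl by simp
      then have "t i = r - 1" using h ij tt d r by (metis nth_eq_iff_index_eq less_imp_diff_less)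
      moreover have "t j = r" using h ij tt d r tl by (metis nth_eq_iff_index_eq)
      ultimately show False using False ij(1) unfolding t_def by (auto split: if_splits)
    qed
    then show ?thesis using b1 by simp
  qed
next
  assume h: "(before xs a b \<and> \<not> (a = xs ! (r - 1) \<and> b = xs ! r)) \<or> (a = xs ! r \<and> b = xs ! (r - 1))"
  define t where "t p = (if p = r - 1 then r else if p = r then r - 1 else p)" for p
  have tt: "swp r xs ! p = xs ! t p" for p using r by (simp add: swp_nth t_def)
  have ttt: "t (t p) = p" for p unfolding t_def using r by auto
  show "before (swp r xs) a b"
  proof (cases "a = xs ! r \<and> b = xs ! (r - 1)")
    case True
    have "swp r xs ! (r - 1) = a" "swp r xs ! r = b" using True r by (auto simp: swp_nth)
    then show ?thesis unfolding before_def using r by (metis diff_less length_swp less_numeral_extra(1) order_less_le_trans)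
  next
    case False
    then have hb: "before xs a b" and nab: "\<not> (a = xs ! (r - 1) \<and> b = xs ! r)" using h by auto
    then obtain i j where ij: "i < j" "j < length xs" "xs ! i = a" "xs ! j = b"
      unfolding before_def by auto
    have "\<not> (i = r - 1 \<and> j = r)" using nab ij by auto
    then have lt: "t i < t j" using ij r unfolding t_def by auto
    have tl: "t j < length xs" using ij r unfolding t_def by auto
    show ?thesis unfolding before_def using lt tl ij tt ttt by (metis length_swp)
  qed
qed


lemma before_swp2:
  assumes d: "distinct xs" and r: "1 \<le> r" "r < length xs" and ab: "a \<noteq> b"
  shows "before (swp r xs) a b \<longleftrightarrow> (before xs a b \<noteq> ({a, b} = pr r xs))"
proof -
  have xy: "xs ! (r - 1) \<noteq> xs ! r" using d r by (simp add: nth_eq_iff_index_eq)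
  have bxy: "before xs (xs ! (r - 1)) (xs ! r)" using r before_nth[of "r - 1" r xs] by simp
  show ?thesis
    unfolding before_swp[OF assms(1-3)] pr_def doubleton_eq_iff
    using ab xy bxy before_asym[OF d] by auto
qed

lemma inv_mem2:
  assumes "distinct xs" "distinct ys" "set xs = set ys" "a \<in> set xs" "b \<in> set xs" "a \<noteq> b"
  shows "{a, b} \<in> invs xs ys \<longleftrightarrow> (before xs a b \<noteq> before ys a b)"
proof -
  have t1: "before xs a b \<or> before xs b a" and t2: "before ys a b \<or> before ys b a"
    using before_total assms by metis+
  show ?thesis
  proof
    assume "{a, b} \<in> invs xs ys"
    then obtain c e where "{a, b} = {c, e}" "before xs c e" "before ys e c" unfolding invs_def by blast
    then show "before xs a b \<noteq> before ys a b"
      using before_asym assms(1,2) unfolding doubleton_eq_iff by blast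
  next
    assume "before xs a b \<noteq> before ys a b"
    then have "(before xs a b \<and> before ys b a) \<or> (before xs b a \<and> before ys a b)"
      using t1 t2 before_asym assms(1,2) by blast
    then show "{a, b} \<in> invs xs ys" unfolding invs_def by (auto simp: insert_commute)
  qed
qed

lemma invs_elem:
  assumes "distinct xs" "Q \<in> invs xs ys"
  shows "\<exists>a b. Q = {a, b} \<and> a \<noteq> b \<and> a \<in> set xs \<and> b \<in> set xs"
  using assms unfolding invs_def by (blast dest: before_set before_neq)

lemma pr_elem:
  assumes "distinct xs" "1 \<le> r" "r < length xs"
  shows "xs ! (r - 1) \<noteq> xs ! r" "xs ! (r - 1) \<in> set xs" "xs ! r \<in> set xs"
  using assms by (auto simp: nth_eq_iff_index_eq)

lemma invs_swp:
  assumes d: "distinct xs" "distinct ys" "set xs = set ys" and r: "1 \<le> r" "r < length xs"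
  shows "Q \<in> invs (swp r xs) ys \<longleftrightarrow> (Q \<in> invs xs ys \<longleftrightarrow> Q \<noteq> pr r xs)"
proof (cases "\<exists>a b. Q = {a, b} \<and> a \<noteq> b \<and> a \<in> set xs \<and> b \<in> set xs")
  case True
  then obtain a b where Q: "Q = {a, b}" "a \<noteq> b" "a \<in> set xs" "b \<in> set xs" by blast
  have ds: "distinct (swp r xs)" using distinct_swp d r by blast
  have ss: "set (swp r xs) = set ys" using set_swp d r by blast
  show ?thesis
    unfolding Q(1)
    using inv_mem2[OF ds d(2) ss, of a b] inv_mem2[OF d, of a b] before_swp2[OF d(1) r Q(2)] Q
      set_swp[OF r]
    by auto
next
  case False
  have "Q \<notin> invs (swp r xs) ys" using False invs_elem[OF distinct_swp[OF r d(1)]] set_swp[OF r] by metis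
  moreover have "Q \<notin> invs xs ys" using False invs_elem[OF d(1)] by metis
  moreover have "Q \<noteq> pr r xs" using False pr_elem[OF d(1) r] unfolding pr_def by blast
  ultimately show ?thesis by blast
qed

lemma invs_self: "distinct xs \<Longrightarrow> invs xs xs = {}"
  unfolding invs_def using before_asym by blast

lemma finite_invs: "finite (invs xs ys)"
proof -
  have "invs xs ys \<subseteq> Pow (set xs)" unfolding invs_def by (auto dest: before_set)
  then show ?thesis by (meson finite_Pow_iff finite_set rev_finite_subset)
qed

definition okw :: "nat \<Rightarrow> (nat \<times> bool) list \<Rightarrow> bool" where
  "okw k u \<longleftrightarrow> (\<forall>l \<in> set u. snd l \<and> 1 \<le> fst l \<and> fst l < k)"

lemma runB_props:
  "okw (length xs) u \<Longrightarrow> distinct xs \<Longrightarrow>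
    length (runB xs u) = length xs \<and> distinct (runB xs u) \<and> set (runB xs u) = set xs"
proof (induction u arbitrary: xs)
  case Nil then show ?case by simp
next
  case (Cons l u)
  then show ?case using distinct_swp set_swp by (auto simp: okw_def)
qed

lemma length_clB[simp]: "length (clB xs u) = length u"
  by (induction u arbitrary: xs) auto

lemma CL:
  assumes "okw (length xs) u" "distinct xs" "distinct (clB xs u)"
  shows "set (clB xs u) = invs xs (runB xs u)"
  using assms
proof (induction u arbitrary: xs)
  case Nil then show ?case by (simp add: invs_self)
next
  case (Cons l u)
  define r where "r = fst l"
  have r: "1 \<le> r" "r < length xs" using Cons.prems unfolding okw_def r_def by auto
  define ys where "ys = runB xs (l # u)"
  have ysp: "distinct ys" "set ys = set xs" using runB_props[OF Cons.prems(1,2)] ys_def by auto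
  have IH: "set (clB (swp r xs) u) = invs (swp r xs) ys"
    using Cons.IH[of "swp r xs"] Cons.prems distinct_swp[OF r] ys_def r_def
    by (auto simp: okw_def)
  have nin: "pr r xs \<notin> set (clB (swp r xs) u)" using Cons.prems(3) r_def by simp
  have P: "pr r xs \<in> invs xs ys"
    using nin IH invs_swp[OF Cons.prems(2) ysp(1) ysp(2)[symmetric] r, of "pr r xs"] by blast
  have "set (clB xs (l # u)) = insert (pr r xs) (invs (swp r xs) ys)" using IH r_def by simp
  also have "\<dots> = invs xs ys"
    using invs_swp[OF Cons.prems(2) ysp(1) ysp(2)[symmetric] r] P by blast
  finally show ?case using ys_def by simp
qed

lemma LEN:
  assumes "okw (length xs) u" "distinct xs" "distinct (clB xs u)"
  shows "length u = card (invs xs (runB xs u))"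
  using CL[OF assms] distinct_card[OF assms(3)] by simp


lemma before_Cons: "before (x # xs) a b \<longleftrightarrow> (a = x \<and> b \<in> set xs) \<or> before xs a b"
proof
  assume "before (x # xs) a b"
  then obtain i j where ij: "i < j" "j < length (x # xs)" "(x # xs) ! i = a" "(x # xs) ! j = b"
    unfolding before_def by blast
  then obtain j' where j': "j = Suc j'" by (cases j) auto
  show "(a = x \<and> b \<in> set xs) \<or> before xs a b"
  proof (cases i)
    case 0 then show ?thesis using ij j' by auto
  next
    case (Suc i') then show ?thesis using ij j' unfolding before_def by auto
  qed
next
  assume "(a = x \<and> b \<in> set xs) \<or> before xs a b"
  then show "before (x # xs) a b"
  proof
    assume "a = x \<and> b \<in> set xs"
    then obtain j where "j < length xs" "xs ! j = b" by (auto simp: in_set_conv_nth)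
    then show ?thesis unfolding before_def using \<open>a = x \<and> b \<in> set xs\<close>
      by (metis Suc_less_eq length_Cons nth_Cons_0 nth_Cons_Suc zero_less_Suc)
  next
    assume "before xs a b"
    then obtain i j where "i < j" "j < length xs" "xs ! i = a" "xs ! j = b" unfolding before_def by blast
    then show ?thesis unfolding before_def
      by (metis Suc_less_eq length_Cons nth_Cons_Suc)
  qed
qed

lemma I4:
  "distinct xs \<Longrightarrow> distinct ys \<Longrightarrow> set xs = set ys \<Longrightarrow> (\<forall>a b. before xs a b \<longrightarrow> before ys a b) \<Longrightarrow> xs = ys"
proof (induction xs arbitrary: ys)
  case Nil then show ?case by simp
next
  case (Cons x xs)
  obtain c ys' where ys: "ys = c # ys'" using Cons.prems(3) by (cases ys) auto
  have "c = x"
  proof (rule ccontr)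
    assume "c \<noteq> x"
    then have "c \<in> set xs" using Cons.prems(3) ys by auto
    then have "before (x # xs) x c" by (simp add: before_Cons)
    then have "before ys x c" using Cons.prems(4) by blast
    moreover have "before ys c x" using \<open>c \<noteq> x\<close> Cons.prems(3) ys by (auto simp: before_Cons)
    ultimately show False using before_asym Cons.prems(2) by blast
  qed
  have "xs = ys'"
  proof (rule Cons.IH)
    show "distinct xs" "distinct ys'" using Cons.prems ys by auto
    show "set xs = set ys'" using Cons.prems ys \<open>c = x\<close> by auto
    show "\<forall>a b. before xs a b \<longrightarrow> before ys' a b"
    proof (intro allI impI)
      fix a b assume "before xs a b"
      then have "before ys a b" using Cons.prems(4) by (simp add: before_Cons)
      then show "before ys' a b" using ys \<open>c = x\<close> \<open>before xs a b\<close> Cons.prems(1)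
        by (auto simp: before_Cons dest: before_set)
    qed
  qed
  then show ?case using ys \<open>c = x\<close> by simp
qed

lemma I5:
  assumes d: "distinct xs" "distinct ys" "set xs = set ys" and ne: "invs xs ys \<noteq> {}"
  shows "\<exists>r. 1 \<le> r \<and> r < length xs \<and> pr r xs \<in> invs xs ys"
proof (rule ccontr)
  assume "\<not> ?thesis"
  then have adj: "before ys (xs ! r) (xs ! Suc r)" if "Suc r < length xs" for r
  proof -
    have "1 \<le> Suc r" by simp
    then have "pr (Suc r) xs \<notin> invs xs ys" using \<open>\<not> (\<exists>r. 1 \<le> r \<and> r < length xs \<and> pr r xs \<in> invs xs ys)\<close> that by blast
    moreover have "before xs (xs ! r) (xs ! Suc r)" using before_nth[of r "Suc r" xs] that by simp
    moreover have "xs ! r \<noteq> xs ! Suc r" using d(1) that by (simp add: nth_eq_iff_index_eq)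
    ultimately show ?thesis
      using inv_mem2[OF d, of "xs ! r" "xs ! Suc r"] that unfolding pr_def by simp
  qed
  have all: "before ys (xs ! i) (xs ! j)" if "i < j" "j < length xs" for i j
    using that
  proof (induction j)
    case 0 then show ?case by simp
  next
    case (Suc j)
    show ?case
    proof (cases "i = j")
      case True then show ?thesis using adj Suc.prems by simp
    next
      case False
      then have "before ys (xs ! i) (xs ! j)" using Suc.IH Suc.prems by simp
      then show ?thesis using adj[of j] Suc.prems before_trans[OF d(2)] by simp
    qed
  qed
  obtain Q where "Q \<in> invs xs ys" using ne by blast
  then obtain a b where "before xs a b" "before ys b a" unfolding invs_def by blast
  then obtain i j where "i < j" "j < length xs" "xs ! i = a" "xs ! j = b" unfolding before_def by blast
  then have "before ys a b" using all by blast
  then show False using \<open>before ys b a\<close> before_asym d(2) by blast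
qed

lemma EX:
  assumes "distinct xs" "distinct ys" "set xs = set ys"
  shows "\<exists>u. okw (length xs) u \<and> distinct (clB xs u) \<and> runB xs u = ys"
  using assms
proof (induction "card (invs xs ys)" arbitrary: xs rule: less_induct)
  case less
  show ?case
  proof (cases "invs xs ys = {}")
    case True
    have all: "\<forall>a b. before xs a b \<longrightarrow> before ys a b"
    proof -
      show "\<forall>a b. before xs a b \<longrightarrow> before ys a b"
      proof (intro allI impI)
        fix a b assume h: "before xs a b"
        have ab: "a \<in> set xs" "b \<in> set xs" using before_set[OF h] by simp_all
        have ne: "a \<noteq> b" by (rule before_neq[OF less.prems(1) h])
        have "{a, b} \<notin> invs xs ys" using True by simp
        then show "before ys a b" using inv_mem2[OF less.prems ab ne] h by simp
      qed
    qed
    have "xs = ys" by (rule I4[OF less.prems(1) less.prems(2) less.prems(3) all])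
    then have "okw (length xs) [] \<and> distinct (clB xs []) \<and> runB xs [] = ys" by (simp add: okw_def)
    then show ?thesis by blast
  next
    case False
    then obtain r where r: "1 \<le> r" "r < length xs" "pr r xs \<in> invs xs ys" using I5[OF less.prems] by blast
    have iv: "invs (swp r xs) ys = invs xs ys - {pr r xs}"
    proof (rule set_eqI)
      fix Q show "Q \<in> invs (swp r xs) ys \<longleftrightarrow> Q \<in> invs xs ys - {pr r xs}"
        using invs_swp[OF less.prems r(1,2), of Q] r(3) by auto
    qed
    have c: "card (invs (swp r xs) ys) < card (invs xs ys)"
      unfolding iv by (rule card_Diff1_less[OF finite_invs r(3)])
    have ds: "distinct (swp r xs)" using distinct_swp[OF r(1,2) less.prems(1)] .
    have ss: "set (swp r xs) = set ys" using set_swp[OF r(1,2)] less.prems(3) by simp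
    obtain u where u: "okw (length (swp r xs)) u" "distinct (clB (swp r xs) u)" "runB (swp r xs) u = ys"
      using less.hyps[OF c ds less.prems(2) ss] by blast
    have "set (clB (swp r xs) u) = invs (swp r xs) ys"
      using CL[OF u(1) ds u(2)] u(3) by simp
    then have "pr r xs \<notin> set (clB (swp r xs) u)" using iv by simp
    then show ?thesis using u r
      by (intro exI[of _ "(r, True) # u"]) (simp add: okw_def)
  qed
qed



lemma swp_far:
  assumes "1 \<le> i" "i < length xs" "1 \<le> j" "j < length xs" "i + 1 < j \<or> j + 1 < i"
  shows "pr j (swp i xs) = pr j xs"
  using assms unfolding pr_def by (auto simp: swp_nth)

lemma swp_comm:
  assumes "1 \<le> i" "i < length xs" "1 \<le> j" "j < length xs" "i + 1 < j \<or> j + 1 < i"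
  shows "swp i (swp j xs) = swp j (swp i xs)"
  by (rule nth_equalityI) (use assms in \<open>auto simp: swp_nth\<close>)

lemma pr_ne:
  assumes "distinct xs" "1 \<le> i" "i < length xs" "1 \<le> j" "j < length xs" "i \<noteq> j"
  shows "pr i xs \<noteq> pr j xs"
  using assms unfolding pr_def doubleton_eq_iff by (auto simp: nth_eq_iff_index_eq)

definition cnd :: "nat list \<Rightarrow> (nat \<times> bool) list \<Rightarrow> nat list \<Rightarrow> bool" where
  "cnd xs u ys \<longleftrightarrow> okw (length xs) u \<and> distinct (clB xs u) \<and> runB xs u = ys"

lemma cnd_tail:
  assumes "cnd xs ((i, b) # u) ys"
  shows "cnd (swp i xs) u ys" "1 \<le> i" "i < length xs" "b"
  using assms by (auto simp: cnd_def okw_def)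

lemma cnd_head:
  assumes "cnd xs ((i, b) # u) ys" "distinct xs"
  shows "pr i xs \<in> invs xs ys"
proof -
  have "set (clB xs ((i, b) # u)) = invs xs ys"
    using CL[of xs "(i, b) # u"] assms unfolding cnd_def by simp
  then show ?thesis by (metis clB.simps(2) fst_conv list.set_intros(1))
qed

lemma cnd_ys:
  assumes "cnd xs u ys" "distinct xs"
  shows "distinct ys" "set ys = set xs" "length ys = length xs"
  using runB_props[of xs u] assms unfolding cnd_def by auto

lemma cnd_len:
  assumes "cnd xs u ys" "distinct xs"
  shows "length u = card (invs xs ys)"
  using LEN[of xs u] assms unfolding cnd_def by simp

lemma cnd_set:
  assumes "cnd xs u ys" "distinct xs"
  shows "set (clB xs u) = invs xs ys"
  using CL[of xs u] assms unfolding cnd_def by simp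

lemma invs_swp_in:
  assumes "distinct xs" "distinct ys" "set xs = set ys" "1 \<le> r" "r < length xs" "pr r xs \<in> invs xs ys"
  shows "invs (swp r xs) ys = invs xs ys - {pr r xs}"
proof (rule set_eqI)
  fix Q show "Q \<in> invs (swp r xs) ys \<longleftrightarrow> Q \<in> invs xs ys - {pr r xs}"
    using invs_swp[OF assms(1-5), of Q] assms(6) by auto
qed

lemma bctx: "braid_eq k u v \<Longrightarrow> braid_eq k (l # u) (l # v)"
  using braid_eq.ctx[of k u v "[l]" "[]"] by simp


lemma far_case:
  assumes IH: "\<And>xs u v ys. length u < m \<Longrightarrow> distinct xs \<Longrightarrow> cnd xs u ys \<Longrightarrow> cnd xs v ys \<Longrightarrow> braid_eq (length xs) u v"
    and d: "distinct xs" and cu: "cnd xs ((i, bi) # u') ys" and cv: "cnd xs ((j, bj) # v') ys"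
    and m: "length ((i, bi) # u') = m" and ij: "i + 1 < j"
  shows "braid_eq (length xs) ((i, bi) # u') ((j, bj) # v')"
proof -
  note ti = cnd_tail[OF cu] and tj = cnd_tail[OF cv]
  have ys: "distinct ys" "set ys = set xs" using cnd_ys[OF cu d] by auto
  have Pi: "pr i xs \<in> invs xs ys" by (rule cnd_head[OF cu d])
  have Pj: "pr j xs \<in> invs xs ys" by (rule cnd_head[OF cv d])
  have far: "i + 1 < j \<or> j + 1 < i" using ij by simp
  have far2: "j + 1 < i \<or> i + 1 < j" using ij by simp
  have neq: "pr i xs \<noteq> pr j xs" using pr_ne[OF d ti(2,3) tj(2,3)] ij by simp
  define x1 where "x1 = swp i xs"
  define x2 where "x2 = swp j x1"
  define y1 where "y1 = swp j xs"
  have dx1: "distinct x1" using distinct_swp[OF ti(2,3) d] x1_def by simp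
  have sx1: "set x1 = set ys" using set_swp[OF ti(2,3)] ys x1_def by simp
  have lx1: "length x1 = length xs" using x1_def by simp
  have dy1: "distinct y1" using distinct_swp[OF tj(2,3) d] y1_def by simp
  have sy1: "set y1 = set ys" using set_swp[OF tj(2,3)] ys y1_def by simp
  have ly1: "length y1 = length xs" using y1_def by simp
  have ix1: "invs x1 ys = invs xs ys - {pr i xs}"
    unfolding x1_def by (rule invs_swp_in[OF d ys(1) ys(2)[symmetric] ti(2,3) Pi])
  have prj1: "pr j x1 = pr j xs" unfolding x1_def by (rule swp_far[OF ti(2,3) tj(2,3) far])
  have Pj1: "pr j x1 \<in> invs x1 ys" using ix1 prj1 Pj neq by simp
  have dx2: "distinct x2" using distinct_swp[OF tj(2) _ dx1] tj(3) lx1 x2_def by simp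
  have sx2: "set x2 = set ys" using set_swp[of j x1] tj(2,3) lx1 sx1 x2_def by simp
  have ix2: "invs x2 ys = invs xs ys - {pr i xs} - {pr j xs}"
    unfolding x2_def using invs_swp_in[OF dx1 ys(1) sx1 tj(2) _ Pj1] tj(3) lx1 ix1 prj1 by simp
  have y2: "swp i y1 = x2" unfolding y1_def x2_def x1_def by (rule swp_comm[OF ti(2,3) tj(2,3) far])
  have pri1: "pr i y1 = pr i xs" unfolding y1_def by (rule swp_far[OF tj(2,3) ti(2,3) far2])
  obtain z where z: "cnd x2 z ys"
    using EX[OF dx2 ys(1) sx2] unfolding cnd_def by blast
  have sz: "set (clB x2 z) = invs x2 ys" by (rule cnd_set[OF z dx2])
  have lx2: "length x2 = length xs" using x2_def lx1 by simp
  have zo: "okw (length xs) z" "distinct (clB x2 z)" "runB x2 z = ys" using z lx2 unfolding cnd_def by auto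
  have nj: "pr j xs \<notin> set (clB x2 z)" using sz ix2 by simp
  have ni: "pr i xs \<notin> set (clB x2 z)" using sz ix2 by simp
  have c1: "cnd x1 ((j, True) # z) ys"
    unfolding cnd_def okw_def using zo nj tj(2,3) lx1 prj1
    by (simp add: x2_def[symmetric] okw_def)
  have c2: "cnd y1 ((i, True) # z) ys"
    unfolding cnd_def okw_def using zo ni ti(2,3) ly1 pri1
    by (simp add: y2 okw_def)
  have lv: "length v' = length u'" using cnd_len[OF cu d] cnd_len[OF cv d] by simp
  have b1: "braid_eq (length xs) u' ((j, True) # z)"
  proof -
    have "braid_eq (length x1) u' ((j, True) # z)"
      by (rule IH[OF _ dx1 ti(1)[folded x1_def] c1]) (use m in simp)
    then show ?thesis using lx1 by simp
  qed
  have b2: "braid_eq (length xs) v' ((i, True) # z)"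
  proof -
    have "braid_eq (length y1) v' ((i, True) # z)"
      by (rule IH[OF _ dy1 tj(1)[folded y1_def] c2]) (use m lv in simp)
    then show ?thesis using ly1 by simp
  qed
  have b3: "braid_eq (length xs) ((i, True) # (j, True) # z) ((j, True) # (i, True) # z)"
    using braid_eq.ctx[OF braid_eq.comm[OF ti(2) ij tj(3)], of "[]" z] by simp
  show ?thesis
    using ti(4) tj(4) braid_eq.trans[OF braid_eq.trans[OF bctx[OF b1] b3] braid_eq.sym[OF bctx[OF b2]]]
    by simp
qed


lemma adj_case:
  assumes IH: "\<And>xs u v ys. length u < m \<Longrightarrow> distinct xs \<Longrightarrow> cnd xs u ys \<Longrightarrow> cnd xs v ys \<Longrightarrow> braid_eq (length xs) u v"
    and d: "distinct xs" and cu: "cnd xs ((i, bi) # u') ys" and cv: "cnd xs ((Suc i, bj) # v') ys"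
    and m: "length ((i, bi) # u') = m"
  shows "braid_eq (length xs) ((i, bi) # u') ((Suc i, bj) # v')"
proof -
  note ti = cnd_tail[OF cu] and tj = cnd_tail[OF cv]
  have ys: "distinct ys" "set ys = set xs" using cnd_ys[OF cu d] by auto
  have Pi: "pr i xs \<in> invs xs ys" by (rule cnd_head[OF cu d])
  have Pj: "pr (Suc i) xs \<in> invs xs ys" by (rule cnd_head[OF cv d])
  define a where "a = xs ! (i - 1)"
  define b where "b = xs ! i"
  define c where "c = xs ! Suc i"
  have i1: "1 \<le> i" "Suc i < length xs" using ti tj by auto
  have abc: "a \<noteq> b" "a \<noteq> c" "b \<noteq> c" using d i1 unfolding a_def b_def c_def
    by (auto simp: nth_eq_iff_index_eq)
  have sabc: "a \<in> set xs" "b \<in> set xs" "c \<in> set xs" using i1 unfolding a_def b_def c_def by auto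
  have pab: "pr i xs = {a, b}" unfolding pr_def a_def b_def by simp
  have pbc: "pr (Suc i) xs = {b, c}" unfolding pr_def b_def c_def by simp
  have bxab: "before xs a b" unfolding a_def b_def using before_nth[of "i - 1" i xs] i1 by simp
  have bxbc: "before xs b c" unfolding b_def c_def using before_nth[of i "Suc i" xs] i1 by simp
  have bxac: "before xs a c" unfolding a_def c_def using before_nth[of "i - 1" "Suc i" xs] i1 by simp
  have yba: "before ys b a"
  proof -
    have "\<not> before ys a b" using inv_mem2[OF d ys(1) ys(2)[symmetric] sabc(1,2) abc(1)] Pi pab bxab by simp
    then show ?thesis using before_total[of a ys b] sabc ys abc by auto
  qed
  have ycb: "before ys c b"
  proof -
    have "\<not> before ys b c" using inv_mem2[OF d ys(1) ys(2)[symmetric] sabc(2,3) abc(3)] Pj pbc bxbc by simp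
    then show ?thesis using before_total[of b ys c] sabc ys abc by auto
  qed
  have yca: "before ys c a" by (rule before_trans[OF ys(1) ycb yba])
  have Pac: "{a, c} \<in> invs xs ys"
    using inv_mem2[OF d ys(1) ys(2)[symmetric] sabc(1,3) abc(2)] bxac yca before_asym[OF ys(1) yca] by simp
  define x1 where "x1 = swp i xs"
  define x2 where "x2 = swp (Suc i) x1"
  define x3 where "x3 = swp i x2"
  define y1 where "y1 = swp (Suc i) xs"
  define y2 where "y2 = swp i y1"
  have l1: "length x1 = length xs" "length x2 = length xs" "length x3 = length xs"
    "length y1 = length xs" "length y2 = length xs"
    unfolding x1_def x2_def x3_def y1_def y2_def by simp_all
  have ii: "i < length xs" "Suc i - 1 = i" using i1 by auto
  have x1n: "x1 ! (i - 1) = b" "x1 ! i = a" "x1 ! Suc i = c"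
    unfolding x1_def a_def b_def c_def using i1 by (auto simp: swp_nth)
  have x2n: "x2 ! (i - 1) = b" "x2 ! i = c" "x2 ! Suc i = a"
    unfolding x2_def using x1n i1 l1 by (auto simp: swp_nth)
  have y1n: "y1 ! (i - 1) = a" "y1 ! i = c" "y1 ! Suc i = b"
    unfolding y1_def a_def b_def c_def using i1 by (auto simp: swp_nth)
  have y2n: "y2 ! (i - 1) = c" "y2 ! i = a" "y2 ! Suc i = b"
    unfolding y2_def using y1n i1 l1 by (auto simp: swp_nth)
  have x3y: "x3 = swp (Suc i) y2"
  proof (rule nth_equalityI)
    show "length x3 = length (swp (Suc i) y2)" using l1 by simp
    fix p assume p: "p < length x3"
    show "x3 ! p = swp (Suc i) y2 ! p"
    proof -
      have A: "x3 ! p = (if p = i - 1 then c else if p = i then b else if p = Suc i then a else xs ! p)"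
        unfolding x3_def x2_def x1_def a_def b_def c_def using i1 l1 by (auto simp: swp_nth)
      have B: "swp (Suc i) y2 ! p = (if p = i - 1 then c else if p = i then b else if p = Suc i then a else xs ! p)"
        unfolding y2_def y1_def a_def b_def c_def using i1 l1 by (auto simp: swp_nth)
      show ?thesis using A B by simp
    qed
  qed
  have dx1: "distinct x1" using distinct_swp[OF ti(2,3) d] x1_def by simp
  have sx1: "set x1 = set ys" using set_swp[OF ti(2,3)] ys x1_def by simp
  have dx2: "distinct x2" using distinct_swp[of "Suc i" x1] i1 l1 dx1 x2_def by simp
  have sx2: "set x2 = set ys" using set_swp[of "Suc i" x1] i1 l1 sx1 x2_def by simp
  have dx3: "distinct x3" using distinct_swp[of i x2] i1 l1 dx2 x3_def by simp
  have sx3: "set x3 = set ys" using set_swp[of i x2] i1 l1 sx2 x3_def by simp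
  have dy1: "distinct y1" using distinct_swp[OF tj(2,3) d] y1_def by simp
  have p1: "pr (Suc i) x1 = {a, c}" unfolding pr_def using x1n by auto
  have p2: "pr i x2 = {b, c}" unfolding pr_def using x2n by auto
  have q1: "pr i y1 = {a, c}" unfolding pr_def using y1n by auto
  have q2: "pr (Suc i) y2 = {a, b}" unfolding pr_def using y2n by (auto simp: insert_commute)
  have ab_ac: "{a, b} \<noteq> {a, c}" "{a, b} \<noteq> {b, c}" "{a, c} \<noteq> {b, c}"
    using abc unfolding doubleton_eq_iff by auto
  have ix1: "invs x1 ys = invs xs ys - {{a, b}}"
    unfolding x1_def using invs_swp_in[OF d ys(1) ys(2)[symmetric] ti(2,3) Pi] pab by simp
  have ix2: "invs x2 ys = invs xs ys - {{a, b}} - {{a, c}}"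
  proof -
    have "pr (Suc i) x1 \<in> invs x1 ys" using p1 ix1 Pac ab_ac by simp
    then show ?thesis unfolding x2_def using invs_swp_in[OF dx1 ys(1) sx1, of "Suc i"] i1 l1 ix1 p1 by simp
  qed
  have ix3: "invs x3 ys = invs xs ys - {{a, b}} - {{a, c}} - {{b, c}}"
  proof -
    have "pr i x2 \<in> invs x2 ys" using p2 ix2 Pj pbc ab_ac by simp
    then show ?thesis unfolding x3_def using invs_swp_in[OF dx2 ys(1) sx2, of i] i1 l1 ix2 p2 by simp
  qed
  obtain z where z: "cnd x3 z ys"
    using EX[OF dx3 ys(1) sx3] unfolding cnd_def by blast
  have sz: "set (clB x3 z) = invs x3 ys" by (rule cnd_set[OF z dx3])
  have zo: "okw (length xs) z" "distinct (clB x3 z)" "runB x3 z = ys" using z l1 unfolding cnd_def by auto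
  have nz: "{a, b} \<notin> set (clB x3 z)" "{a, c} \<notin> set (clB x3 z)" "{b, c} \<notin> set (clB x3 z)"
    using sz ix3 by auto
  have c1: "cnd x1 ((Suc i, True) # (i, True) # z) ys"
    unfolding cnd_def okw_def using zo nz i1 l1 p1 p2 ab_ac
    by (simp add: x2_def[symmetric] x3_def[symmetric] okw_def)
  have c2: "cnd y1 ((i, True) # (Suc i, True) # z) ys"
    unfolding cnd_def okw_def using zo nz i1 l1 q1 q2 ab_ac
    by (simp add: y2_def[symmetric] x3y[symmetric] okw_def)
  have lv: "length v' = length u'" using cnd_len[OF cu d] cnd_len[OF cv d] by simp
  have b1: "braid_eq (length xs) u' ((Suc i, True) # (i, True) # z)"
  proof -
    have "braid_eq (length x1) u' ((Suc i, True) # (i, True) # z)"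
      by (rule IH[OF _ dx1 ti(1)[folded x1_def] c1]) (use m in simp)
    then show ?thesis using l1 by simp
  qed
  have b2: "braid_eq (length xs) v' ((i, True) # (Suc i, True) # z)"
  proof -
    have "braid_eq (length y1) v' ((i, True) # (Suc i, True) # z)"
      by (rule IH[OF _ dy1 tj(1)[folded y1_def] c2]) (use m lv in simp)
    then show ?thesis using l1 by simp
  qed
  have b3: "braid_eq (length xs) ((i, True) # (Suc i, True) # (i, True) # z) ((Suc i, True) # (i, True) # (Suc i, True) # z)"
    using braid_eq.ctx[OF braid_eq.braid[OF ti(2), of "length xs"], of "[]" z] i1 by simp
  show ?thesis
    using ti(4) tj(4) braid_eq.trans[OF braid_eq.trans[OF bctx[OF b1] b3] braid_eq.sym[OF bctx[OF b2]]]
    by simp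
qed


lemma cnd_Nil: "distinct xs \<Longrightarrow> cnd xs [] ys \<Longrightarrow> cnd xs v ys \<Longrightarrow> v = []"
  using cnd_len[of xs "[]" ys] cnd_len[of xs v ys] by simp

lemma matsumoto_aux:
  "\<forall>xs u v ys. length u = m \<longrightarrow> distinct xs \<longrightarrow> cnd xs u ys \<longrightarrow> cnd xs v ys \<longrightarrow> braid_eq (length xs) u v"
proof (induction m rule: less_induct)
  case (less m)
  have IH: "\<And>xs u v ys. length u < m \<Longrightarrow> distinct xs \<Longrightarrow> cnd xs u ys \<Longrightarrow> cnd xs v ys \<Longrightarrow> braid_eq (length xs) u v"
    using less by blast
  show ?case
  proof (intro allI impI)
    fix xs u v ys
    assume m: "length u = m" and d: "distinct xs" and cu: "cnd xs u ys" and cv: "cnd xs v ys"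
    show "braid_eq (length xs) u v"
    proof (cases u)
      case Nil
      then have "v = []" using cnd_Nil d cu cv by blast
      then show ?thesis using Nil braid_eq.refl by simp
    next
      case (Cons l u')
      obtain i bi where l: "l = (i, bi)" by (cases l)
      have "v \<noteq> []" using cnd_Nil[OF d _ cu] cv Cons by auto
      then obtain j bj v' where v: "v = (j, bj) # v'" by (metis list.exhaust surj_pair)
      have cu': "cnd xs ((i, bi) # u') ys" using cu Cons l by simp
      have cv': "cnd xs ((j, bj) # v') ys" using cv v by simp
      have mm: "length ((i, bi) # u') = m" using m Cons by simp
      have lv: "length ((j, bj) # v') = m" using cnd_len[OF cu d] cnd_len[OF cv d] m v by simp
      have "braid_eq (length xs) ((i, bi) # u') ((j, bj) # v')"
      proof (cases "i = j")
        case True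
        have bb: "bi" "bj" using cnd_tail(4)[OF cu'] cnd_tail(4)[OF cv'] by auto
        have d1: "distinct (swp i xs)" using distinct_swp[OF cnd_tail(2,3)[OF cu'] d] .
        have "braid_eq (length (swp i xs)) u' v'"
          by (rule IH[OF _ d1 cnd_tail(1)[OF cu']]) (use mm cnd_tail(1)[OF cv'] True in simp_all)
        then show ?thesis using bctx True bb by simp
      next
        case False
        then consider "i + 1 < j" | "j + 1 < i" | "j = Suc i" | "i = Suc j" by linarith
        then show ?thesis
        proof cases
          case 1 then show ?thesis using far_case[OF IH d cu' cv' mm] by simp
        next
          case 2 then show ?thesis using braid_eq.sym[OF far_case[OF IH d cv' cu' lv]] by simp
        next
          case 3 then show ?thesis using adj_case[OF IH d cu'] cv' mm 3 by simp
        next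
          case 4 then show ?thesis using braid_eq.sym[OF adj_case[OF IH d cv'[unfolded 4]]] cu' lv 4 by simp
        qed
      qed
      then show ?thesis using Cons l v by simp
    qed
  qed
qed

lemma matsumoto:
  "distinct xs \<Longrightarrow> cnd xs u ys \<Longrightarrow> cnd xs v ys \<Longrightarrow> braid_eq (length xs) u v"
  using matsumoto_aux by blast



fun run :: "gen list \<Rightarrow> (nat \<Rightarrow> nat) \<Rightarrow> (nat \<Rightarrow> nat)" where
  "run [] st = st"
| "run (Sig i # w) st = run w (sw i st)"
| "run (SigInv i # w) st = run w (sw i st)"
| "run (Eps # w) st = run w st"

definition FF :: "nat set \<Rightarrow> nat \<Rightarrow> (nat \<Rightarrow> nat) \<Rightarrow> nat list" where
  "FF L n st = filter (\<lambda>x. x \<in> L) (map st [1..<Suc n])"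

definition pm :: "nat \<Rightarrow> (nat \<Rightarrow> nat) \<Rightarrow> bool" where
  "pm n st \<longleftrightarrow> inj_on st {1..n} \<and> st ` {1..n} = {1..n}"

definition tr :: "nat \<Rightarrow> nat \<Rightarrow> nat" where
  "tr i p = (if p = i then Suc i else if p = Suc i then i else p)"

lemma sw_tr: "sw i st = st \<circ> tr i"
  by (rule ext) (simp add: sw_def tr_def)

lemma tr_tr: "tr i (tr i p) = p"
  by (simp add: tr_def)

lemma bij_tr: "bij (tr i)"
  by (rule o_bij[of "tr i"]) (auto simp: tr_tr)

lemma tr_range: "1 \<le> i \<Longrightarrow> i < n \<Longrightarrow> p \<in> {1..n} \<Longrightarrow> tr i p \<in> {1..n}"
  by (auto simp: tr_def)

lemma tr_img: "1 \<le> i \<Longrightarrow> i < n \<Longrightarrow> tr i ` {1..n} = {1..n}"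
proof
  assume a: "1 \<le> i" "i < n"
  show "tr i ` {1..n} \<subseteq> {1..n}" using tr_range[OF a] by blast
  show "{1..n} \<subseteq> tr i ` {1..n}"
  proof
    fix p assume "p \<in> {1..n}"
    then have "tr i p \<in> {1..n}" "tr i (tr i p) = p" using tr_range[OF a] tr_tr by auto
    then show "p \<in> tr i ` {1..n}" by (metis image_eqI)
  qed
qed

lemma pm_sw: assumes "1 \<le> i" "i < n" "pm n st" shows "pm n (sw i st)"
proof -
  have "inj_on (tr i) {1..n}" using bij_tr by (metis bij_is_inj inj_on_subset subset_UNIV)
  moreover have "inj_on st (tr i ` {1..n})" using assms tr_img unfolding pm_def by simp
  ultimately have "inj_on (st \<circ> tr i) {1..n}" by (rule comp_inj_on)
  moreover have "(st \<circ> tr i) ` {1..n} = {1..n}"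
  proof -
    have "(st \<circ> tr i) ` {1..n} = st ` (tr i ` {1..n})" by (rule image_comp[symmetric])
    also have "\<dots> = {1..n}" using assms tr_img[OF assms(1,2)] unfolding pm_def by simp
    finally show ?thesis .
  qed
  ultimately show ?thesis unfolding pm_def sw_tr by simp
qed

lemma pm_id: "pm n id" by (simp add: pm_def)

lemma run_track: "run w st (track w p) = st p"
proof (induction w arbitrary: st p)
  case Nil then show ?case by simp
next
  case (Cons g w)
  show ?case
  proof (cases g)
    case (Sig i) then show ?thesis using Cons by (simp add: sw_def)
  next
    case (SigInv i) then show ?thesis using Cons by (simp add: sw_def)
  next
    case Eps then show ?thesis using Cons by simp
  qed
qed

lemma bij_track: "bij (track w)"
proof (induction w)
  case Nil
  have e: "track [] = id" by (rule ext) simp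
  show ?case unfolding e by (rule bij_id)
next
  case (Cons g w)
  show ?case
  proof (cases g)
    case (Sig i)
    have "track (g # w) = track w \<circ> tr i" by (rule ext) (simp add: Sig tr_def)
    then show ?thesis using Cons bij_tr bij_comp by metis
  next
    case (SigInv i)
    have "track (g # w) = track w \<circ> tr i" by (rule ext) (simp add: SigInv tr_def)
    then show ?thesis using Cons bij_tr bij_comp by metis
  next
    case Eps
    have "track (g # w) = track w" by (rule ext) (simp add: Eps)
    then show ?thesis using Cons by simp
  qed
qed

lemma track_run: "track w (run w id q) = q"
proof -
  obtain p where p: "track w p = q" using bij_track[of w] by (metis bij_pointE)
  have "run w id q = p" using run_track[of w id p] p by simp
  then show ?thesis using p by simp
qed

lemma run_L: "run w id q \<in> L \<longleftrightarrow> q \<in> track w ` L"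
proof
  assume "run w id q \<in> L"
  then show "q \<in> track w ` L" using track_run[of w q] by (metis image_eqI)
next
  assume "q \<in> track w ` L"
  then obtain a where "a \<in> L" "q = track w a" by blast
  then show "run w id q \<in> L" using run_track[of w id a] by simp
qed

lemma valid_Cons: "valid_word n (g # w) \<longleftrightarrow> valid_word n [g] \<and> valid_word n w"
  by (auto simp: valid_word_def)

lemma valid_Sig: "valid_word n (Sig i # w) \<longleftrightarrow> 1 \<le> i \<and> i < n \<and> valid_word n w"
  by (auto simp: valid_word_def)
lemma valid_SigInv: "valid_word n (SigInv i # w) \<longleftrightarrow> 1 \<le> i \<and> i < n \<and> valid_word n w"
  by (auto simp: valid_word_def)
lemma valid_Eps: "valid_word n (Eps # w) \<longleftrightarrow> valid_word n w"
  by (auto simp: valid_word_def)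

lemma track_range: "valid_word n w \<Longrightarrow> p \<in> {1..n} \<Longrightarrow> track w p \<in> {1..n}"
proof (induction w arbitrary: p)
  case Nil then show ?case by simp
next
  case (Cons g w)
  show ?case
  proof (cases g)
    case (Sig i) then show ?thesis using Cons tr_range[of i n p] by (simp add: valid_Sig tr_def)
  next
    case (SigInv i) then show ?thesis using Cons tr_range[of i n p] by (simp add: valid_SigInv tr_def)
  next
    case Eps then show ?thesis using Cons by (simp add: valid_Eps)
  qed
qed

lemma filter_map_eq:
  "(\<forall>x\<in>set xs. P (f x) \<longrightarrow> g x = f x) \<Longrightarrow> (\<forall>x\<in>set xs. P (g x) \<longrightarrow> f x = g x) \<Longrightarrow>
   filter P (map f xs) = filter P (map g xs)"
proof (induction xs)
  case Nil then show ?case by simp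
next
  case (Cons x xs)
  have h1: "\<forall>y\<in>set xs. P (f y) \<longrightarrow> g y = f y" using Cons.prems(1) by simp
  have h2: "\<forall>y\<in>set xs. P (g y) \<longrightarrow> f y = g y" using Cons.prems(2) by simp
  have IH: "filter P (map f xs) = filter P (map g xs)" by (rule Cons.IH[OF h1 h2])
  have x1: "P (f x) \<longrightarrow> g x = f x" using Cons.prems(1) by simp
  have x2: "P (g x) \<longrightarrow> f x = g x" using Cons.prems(2) by simp
  show ?case
  proof (cases "P (f x)")
    case True
    then have "g x = f x" using x1 by simp
    then show ?thesis using IH True by simp
  next
    case False
    then have "\<not> P (g x)" using x2 by metis
    then show ?thesis using IH False by simp
  qed
qed

lemma filter_map_eq_rev:
  "filter P (map f xs) = filter P (map g xs) \<Longrightarrow> (\<forall>x\<in>set xs. P (f x) \<longleftrightarrow> P (g x)) \<Longrightarrow>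
   (\<forall>x\<in>set xs. P (f x) \<longrightarrow> f x = g x)"
proof (induction xs)
  case Nil then show ?case by simp
next
  case (Cons x xs)
  have h2: "\<forall>y\<in>set xs. P (f y) \<longleftrightarrow> P (g y)" using Cons.prems(2) by simp
  have x2: "P (f x) \<longleftrightarrow> P (g x)" using Cons.prems(2) by simp
  have e: "filter P (map f (x # xs)) = filter P (map g (x # xs))" by (rule Cons.prems(1))
  show ?case
  proof (cases "P (f x)")
    case True
    then have "P (g x)" using x2 by simp
    then have fx: "f x = g x" and ft: "filter P (map f xs) = filter P (map g xs)" using e True by simp_all
    have IH: "\<forall>y\<in>set xs. P (f y) \<longrightarrow> f y = g y" by (rule Cons.IH[OF ft h2])
    show ?thesis
    proof (intro ballI impI)
      fix y assume "y \<in> set (x # xs)" "P (f y)"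
      then have "y = x \<or> y \<in> set xs" by simp
      then show "f y = g y" using IH fx \<open>P (f y)\<close> by blast
    qed
  next
    case False
    then have "\<not> P (g x)" using x2 by simp
    then have ft: "filter P (map f xs) = filter P (map g xs)" using e False by simp
    have IH: "\<forall>y\<in>set xs. P (f y) \<longrightarrow> f y = g y" by (rule Cons.IH[OF ft h2])
    show ?thesis
    proof (intro ballI impI)
      fix y assume "y \<in> set (x # xs)" "P (f y)"
      then have "y = x \<or> y \<in> set xs" by simp
      then show "f y = g y" using IH False \<open>P (f y)\<close> by blast
    qed
  qed
qed


lemma split_upt:
  assumes "1 \<le> i" "i < n"
  shows "[1..<Suc n] = [1..<i] @ [i, Suc i] @ [Suc (Suc i)..<Suc n]"
proof -
  have "[1..<Suc n] = [1..<i] @ [i..<Suc n]" using assms upt_add_eq_append[of 1 i "Suc n - i"] by simp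
  also have "[i..<Suc n] = i # Suc i # [Suc (Suc i)..<Suc n]" using assms by (simp add: upt_conv_Cons)
  finally show ?thesis by simp
qed

lemma swp_app: "swp (Suc (length A)) (A @ x # y # C) = A @ y # x # C"
  by (simp add: swp_def nth_append list_update_append)

lemma pr_app: "pr (Suc (length A)) (A @ x # y # C) = {x, y}"
  by (simp add: pr_def nth_append)

definition rk :: "nat set \<Rightarrow> (nat \<Rightarrow> nat) \<Rightarrow> nat \<Rightarrow> nat" where
  "rk L st i = card {p. 1 \<le> p \<and> p \<le> i \<and> st p \<in> L}"

lemma FF_step:
  fixes L :: "nat set" and st :: "nat \<Rightarrow> nat"
  assumes "1 \<le> i" "i < n"
  defines "A \<equiv> filter (\<lambda>x. x \<in> L) (map st [1..<i])"
  defines "C \<equiv> filter (\<lambda>x. x \<in> L) (map st [Suc (Suc i)..<Suc n])"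
  shows "FF L n st = A @ filter (\<lambda>x. x \<in> L) [st i, st (Suc i)] @ C"
    "FF L n (sw i st) = A @ filter (\<lambda>x. x \<in> L) [st (Suc i), st i] @ C"
    "rk L st i = length A + (if st i \<in> L then 1 else 0)"
proof -
  show "FF L n st = A @ filter (\<lambda>x. x \<in> L) [st i, st (Suc i)] @ C"
    unfolding FF_def A_def C_def by (subst split_upt[OF assms(1,2)]) simp
  have m1: "map (sw i st) [1..<i] = map st [1..<i]" by (simp add: sw_def)
  have m2: "map (sw i st) [Suc (Suc i)..<Suc n] = map st [Suc (Suc i)..<Suc n]" by (simp add: sw_def)
  show "FF L n (sw i st) = A @ filter (\<lambda>x. x \<in> L) [st (Suc i), st i] @ C"
    unfolding FF_def A_def C_def by (subst split_upt[OF assms(1,2)]) (simp add: m1 m2, simp add: sw_def)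
  have lA: "length A = card ({p. st p \<in> L} \<inter> {1..<i})"
    unfolding A_def by (simp add: distinct_length_filter comp_def)
  have eq: "{p. 1 \<le> p \<and> p \<le> i \<and> st p \<in> L} = ({p. st p \<in> L} \<inter> {1..<i}) \<union> (if st i \<in> L then {i} else {})"
    using assms(1) by (auto simp: order_le_less)
  show "rk L st i = length A + (if st i \<in> L then 1 else 0)"
    unfolding rk_def eq lA by (simp add: card_insert_if)
qed

lemma red_Sig: "red L (Sig i # w) st =
   (if st i \<in> L \<and> st (Suc i) \<in> L then [(rk L st i, True)] else []) @ red L w (sw i st)"
  by (simp add: rk_def)

lemma red_SigInv: "red L (SigInv i # w) st =
   (if st i \<in> L \<and> st (Suc i) \<in> L then [(rk L st i, False)] else []) @ red L w (sw i st)"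
  by (simp add: rk_def)

declare red.simps(2,3)[simp del]

lemma step_generic:
  assumes "F1 = A @ filter (\<lambda>x. x \<in> L) [x, y] @ C" "F2 = A @ filter (\<lambda>x. x \<in> L) [y, x] @ C"
    "r = length A + (if x \<in> L then 1 else 0)"
  shows "length F2 = length F1"
    "x \<in> L \<and> y \<in> L \<Longrightarrow> F2 = swp r F1 \<and> 1 \<le> r \<and> r < length F1 \<and> pr r F1 = {x, y}"
    "\<not> (x \<in> L \<and> y \<in> L) \<Longrightarrow> F2 = F1"
  using assms by (auto simp: swp_app pr_app)

lemma step_facts:
  assumes "1 \<le> i" "i < n"
  shows "length (FF L n (sw i st)) = length (FF L n st)"
    "st i \<in> L \<and> st (Suc i) \<in> L \<Longrightarrow> FF L n (sw i st) = swp (rk L st i) (FF L n st) \<and>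
       1 \<le> rk L st i \<and> rk L st i < length (FF L n st) \<and> pr (rk L st i) (FF L n st) = {st i, st (Suc i)}"
    "\<not> (st i \<in> L \<and> st (Suc i) \<in> L) \<Longrightarrow> FF L n (sw i st) = FF L n st"
  using step_generic[OF FF_step(1,2,3)[OF assms, where L=L and st=st]] by blast+

lemma M_lemma:
  "valid_word n w \<Longrightarrow>
    runB (FF L n st) (red L w st) = FF L n (run w st) \<and>
    (\<forall>l\<in>set (red L w st). 1 \<le> fst l \<and> fst l < length (FF L n st)) \<and>
    clB (FF L n st) (red L w st) = map (\<lambda>(x, y). {x, y}) (filter (\<lambda>(x, y). x \<in> L \<and> y \<in> L) (crossings w st))"
proof (induction w arbitrary: st)
  case Nil then show ?case by simp
next
  case (Cons g w)
  show ?case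
  proof (cases g)
    case (Sig i)
    have i: "1 \<le> i" "i < n" and vw: "valid_word n w" using Cons.prems Sig by (auto simp: valid_Sig)
    note IH = Cons.IH[OF vw, of "sw i st"]
    note sf = step_facts[OF i, where L=L and st=st]
    show ?thesis
    proof (cases "st i \<in> L \<and> st (Suc i) \<in> L")
      case True
      then show ?thesis using IH sf(1) sf(2)[OF True] Sig by (simp add: red_Sig)
    next
      case False
      have r: "red L (g # w) st = red L w (sw i st)" using False Sig by (simp add: red_Sig)
      show ?thesis unfolding r using IH sf(1) sf(3)[OF False] Sig False by simp
    qed
  next
    case (SigInv i)
    have i: "1 \<le> i" "i < n" and vw: "valid_word n w" using Cons.prems SigInv by (auto simp: valid_SigInv)
    note IH = Cons.IH[OF vw, of "sw i st"]
    note sf = step_facts[OF i, where L=L and st=st]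
    show ?thesis
    proof (cases "st i \<in> L \<and> st (Suc i) \<in> L")
      case True
      then show ?thesis using IH sf(1) sf(2)[OF True] SigInv by (simp add: red_SigInv)
    next
      case False
      have r: "red L (g # w) st = red L w (sw i st)" using False SigInv by (simp add: red_SigInv)
      show ?thesis unfolding r using IH sf(1) sf(3)[OF False] SigInv False by simp
    qed
  next
    case Eps
    then show ?thesis using Cons by (simp add: valid_Eps)
  qed
qed

lemma red_pos: "positive_word w \<Longrightarrow> \<forall>l\<in>set (red L w st). snd l"
proof (induction w arbitrary: st)
  case Nil then show ?case by simp
next
  case (Cons g w)
  have pw: "positive_word w" using Cons.prems by (simp add: positive_word_def)
  show ?case
  proof (cases g)
    case (Sig i) then show ?thesis using Cons.IH[OF pw] by (auto simp: red_Sig)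
  next
    case (SigInv i) then show ?thesis using Cons.prems unfolding positive_word_def by (metis list.set_intros(1))
  next
    case Eps then show ?thesis using Cons.IH[OF pw] by simp
  qed
qed



lemma FF_props:
  assumes "L \<subseteq> {1..n}" "pm n st"
  shows "distinct (FF L n st)" "set (FF L n st) = L" "length (FF L n st) = card L"
proof -
  have su: "set [1..<Suc n] = {1..n}" by auto
  have inj: "inj_on st (set [1..<Suc n])" using assms(2) unfolding pm_def su by simp
  have "distinct (map st [1..<Suc n])"
    using inj distinct_map distinct_upt by metis
  then show d: "distinct (FF L n st)" unfolding FF_def by simp
  have "set (map st [1..<Suc n]) = {1..n}"
    using assms(2) unfolding pm_def set_map su by simp
  then show s: "set (FF L n st) = L" unfolding FF_def using assms(1) by auto
  show "length (FF L n st) = card L" using distinct_card[OF d] s by simp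
qed

lemma pm_run: "valid_word n w \<Longrightarrow> pm n st \<Longrightarrow> pm n (run w st)"
proof (induction w arbitrary: st)
  case Nil then show ?case by simp
next
  case (Cons g w)
  show ?case
  proof (cases g)
    case (Sig i) then show ?thesis using Cons pm_sw[of i n st] by (simp add: valid_Sig)
  next
    case (SigInv i) then show ?thesis using Cons pm_sw[of i n st] by (simp add: valid_SigInv)
  next
    case Eps then show ?thesis using Cons by (simp add: valid_Eps)
  qed
qed

lemma cross_ne: "valid_word n w \<Longrightarrow> pm n st \<Longrightarrow> \<forall>e\<in>set (crossings w st). fst e \<noteq> snd e"
proof (induction w arbitrary: st)
  case Nil then show ?case by simp
next
  case (Cons g w)
  show ?case
  proof (cases g)
    case (Sig i)
    have i: "1 \<le> i" "i < n" "valid_word n w" using Cons.prems Sig by (auto simp: valid_Sig)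
    have m: "i \<in> {1..n}" "Suc i \<in> {1..n}" using i by auto
    have "inj_on st {1..n}" using Cons.prems(2) unfolding pm_def by simp
    then have "st i \<noteq> st (Suc i)" using m by (metis inj_onD n_not_Suc_n)
    then show ?thesis using Cons.IH[OF i(3) pm_sw[OF i(1,2) Cons.prems(2)]] Sig by simp
  next
    case (SigInv i)
    have i: "1 \<le> i" "i < n" "valid_word n w" using Cons.prems SigInv by (auto simp: valid_SigInv)
    have m: "i \<in> {1..n}" "Suc i \<in> {1..n}" using i by auto
    have "inj_on st {1..n}" using Cons.prems(2) unfolding pm_def by simp
    then have "st i \<noteq> st (Suc i)" using m by (metis inj_onD n_not_Suc_n)
    then show ?thesis using Cons.IH[OF i(3) pm_sw[OF i(1,2) Cons.prems(2)]] SigInv by simp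
  next
    case Eps then show ?thesis using Cons by (simp add: valid_Eps)
  qed
qed

lemma runB_app: "runB xs (u @ v) = runB (runB xs u) v"
  by (induction u arbitrary: xs) auto

lemma length_runB: "length (runB xs u) = length xs"
  by (induction u arbitrary: xs) auto

lemma swp_swp: "1 \<le> i \<Longrightarrow> i < length xs \<Longrightarrow> swp i (swp i xs) = xs"
  by (rule nth_equalityI) (auto simp: swp_nth)

lemma swp_braid: "1 \<le> i \<Longrightarrow> i + 1 < length xs \<Longrightarrow>
   swp i (swp (i + 1) (swp i xs)) = swp (i + 1) (swp i (swp (i + 1) xs))"
  by (rule nth_equalityI) (auto simp: swp_nth)

lemma braid_run: "braid_eq k u v \<Longrightarrow> length xs = k \<Longrightarrow> runB xs u = runB xs v"
proof (induction arbitrary: xs rule: braid_eq.induct)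
  case (refl u) then show ?case by simp
next
  case (sym u v) then show ?case by simp
next
  case (trans u v x) then show ?case by simp
next
  case (ctx u v x y)
  have "runB (runB xs x) u = runB (runB xs x) v" using ctx by (simp add: length_runB)
  then show ?case by (simp add: runB_app)
next
  case (inv i b) then show ?case by (simp add: swp_swp)
next
  case (comm i j) then show ?case using swp_comm[of i xs j] by simp
next
  case (braid i) then show ?case using swp_braid[of i xs] by simp
qed

lemma tau_dom: "dom (tau n w) = live n w"
  unfolding tau_def dom_def by auto

lemma live_sub: "live n w \<subseteq> {1..n}"
  unfolding live_def by auto

lemma pb_eq_tau:
  assumes v1: "valid_word n w1" and v2: "valid_word n w2" and pb: "pb_eq n w1 w2"
  shows "tau n w1 = tau n w2"
proof -
  define L where "L = live n w1"
  have L2: "live n w2 = L" using pb L_def unfolding pb_eq_def by simp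
  have T: "track w1 ` L = track w2 ` L" using pb L_def L2 unfolding pb_eq_def by simp
  have be: "braid_eq (card L) (red L w1 id) (red L w2 id)" using pb L_def L2 unfolding pb_eq_def by simp
  have Ls: "L \<subseteq> {1..n}" using live_sub L_def by simp
  have lF: "length (FF L n id) = card L" using FF_props(3)[OF Ls pm_id] .
  have "runB (FF L n id) (red L w1 id) = runB (FF L n id) (red L w2 id)"
    using braid_run[OF be lF] .
  then have F: "FF L n (run w1 id) = FF L n (run w2 id)"
    using M_lemma[OF v1, of L id] M_lemma[OF v2, of L id] by simp
  have eqv: "\<forall>q\<in>set [1..<Suc n]. (run w1 id q \<in> L) \<longleftrightarrow> (run w2 id q \<in> L)"
    using run_L[of w1 _ L] run_L[of w2 _ L] T by simp
  have pt: "\<forall>q\<in>set [1..<Suc n]. run w1 id q \<in> L \<longrightarrow> run w1 id q = run w2 id q"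
    using filter_map_eq_rev[OF F[unfolded FF_def] eqv] .
  have su: "set [1..<Suc n] = {1..n}" by auto
  have pt': "\<And>q. q \<in> {1..n} \<Longrightarrow> run w1 id q \<in> L \<Longrightarrow> run w1 id q = run w2 id q"
    using pt unfolding su by blast
  have tr: "track w1 a = track w2 a" if a: "a \<in> L" for a
  proof -
    define q where "q = track w1 a"
    have q: "q \<in> {1..n}" using track_range[OF v1] a Ls q_def by auto
    have r1: "run w1 id q = a" using run_track[of w1 id a] q_def by simp
    then have "run w2 id q = a" using pt'[OF q] a by simp
    then have "track w2 a = q" using track_run[of w2 q] by simp
    then show ?thesis using q_def by simp
  qed
  show ?thesis unfolding tau_def using L2 L_def tr by (auto intro!: ext)
qed


lemma length_filter_mono:
  "(\<And>x. P x \<Longrightarrow> Q x) \<Longrightarrow> length (filter P xs) \<le> length (filter Q xs)"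
  by (induction xs) auto

lemma distinct_from_count:
  "(\<forall>z. length (filter (\<lambda>x. f x = z) xs) \<le> 1) \<Longrightarrow> distinct (map f xs)"
proof (induction xs)
  case Nil then show ?case by simp
next
  case (Cons x xs)
  have h: "length (filter (\<lambda>y. f y = z) xs) \<le> 1" for z
    using Cons.prems[rule_format, of z] by (simp split: if_splits)
  have "length (filter (\<lambda>y. f y = f x) xs) = 0" using Cons.prems[rule_format, of "f x"] by simp
  then have "f x \<notin> f ` set xs" by (auto simp: filter_empty_conv)
  then show ?case using Cons.IH h by simp
qed

lemma cross_distinct:
  assumes v: "valid_word n w" and c: "crosses_at_most_once n w"
  defines "L \<equiv> live n w"
  shows "distinct (map (\<lambda>(x, y). {x, y}) (filter (\<lambda>(x, y). x \<in> L \<and> y \<in> L) (crossings w id)))"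
proof (rule distinct_from_count, rule allI)
  fix z
  define xs where "xs = filter (\<lambda>(x, y). x \<in> L \<and> y \<in> L) (crossings w id)"
  show "length (filter (\<lambda>e. (\<lambda>(x, y). {x, y}) e = z) (filter (\<lambda>(x, y). x \<in> L \<and> y \<in> L) (crossings w id))) \<le> 1"
  proof (cases "\<exists>e\<in>set xs. (\<lambda>(x, y). {x, y}) e = z")
    case True
    then obtain a b where ab: "(a, b) \<in> set xs" "{a, b} = z" by auto
    have ne: "a \<noteq> b" using cross_ne[OF v pm_id] ab(1) unfolding xs_def by fastforce
    have abL: "a \<in> L" "b \<in> L" using ab(1) unfolding xs_def by auto
    have "length (filter (\<lambda>e. (\<lambda>(x, y). {x, y}) e = z) xs)
        = length (filter (\<lambda>e. (\<lambda>(x, y). {x, y}) e = z \<and> (\<lambda>(x, y). x \<in> L \<and> y \<in> L) e) (crossings w id))"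
      unfolding xs_def by (simp add: filter_filter conj_commute)
    also have "\<dots> \<le> length (filter (\<lambda>(x, y). {x, y} = {a, b}) (crossings w id))"
      by (rule length_filter_mono) (use ab(2) in auto)
    also have "\<dots> \<le> 1" using c abL ne unfolding crosses_at_most_once_def L_def by blast
    finally show ?thesis unfolding xs_def .
  next
    case False
    then have "filter (\<lambda>e. (\<lambda>(x, y). {x, y}) e = z) xs = []" by (simp add: filter_empty_conv)
    then show ?thesis unfolding xs_def by simp
  qed
qed

lemma part1:
  assumes v1: "valid_word n w1" and v2: "valid_word n w2"
    and i1: "in_IBn_plus n w1" and i2: "in_IBn_plus n w2" and t: "tau n w1 = tau n w2"
  shows "pb_eq n w1 w2"
proof -
  obtain w1' where w1': "valid_word n w1'" "positive_word w1'" "crosses_at_most_once n w1'" "pb_eq n w1 w1'"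
    using i1 unfolding in_IBn_plus_def by blast
  obtain w2' where w2': "valid_word n w2'" "positive_word w2'" "crosses_at_most_once n w2'" "pb_eq n w2 w2'"
    using i2 unfolding in_IBn_plus_def by blast
  have t1: "tau n w1' = tau n w1" using pb_eq_tau[OF v1 w1'(1) w1'(4)] by simp
  have t2: "tau n w2' = tau n w2" using pb_eq_tau[OF v2 w2'(1) w2'(4)] by simp
  define L where "L = live n w1"
  have L2: "live n w2 = L" using tau_dom[of n w1] tau_dom[of n w2] t L_def by simp
  have L1': "live n w1' = L" using tau_dom[of n w1] tau_dom[of n w1'] t1 L_def by simp
  have L2': "live n w2' = L" using tau_dom[of n w2] tau_dom[of n w2'] t2 L2 by simp
  have tr: "track w1 a = track w2 a" if "a \<in> L" for a
    using fun_cong[OF t, of a] that L2 L_def unfolding tau_def by (simp split: if_splits)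
  have tr': "track w1' a = track w2' a" if "a \<in> L" for a
    using fun_cong[OF t, of a] fun_cong[OF t1, of a] fun_cong[OF t2, of a] that L2 L_def L1' L2'
    unfolding tau_def by (simp split: if_splits)
  have Ls: "L \<subseteq> {1..n}" using live_sub L_def by simp
  note FP = FF_props[OF Ls pm_id]
  have pt1: "\<forall>q\<in>set [1..<Suc n]. run w1' id q \<in> L \<longrightarrow> run w2' id q = run w1' id q"
  proof (intro ballI impI)
    fix q assume "run w1' id q \<in> L"
    then obtain a where a: "a \<in> L" "a = run w1' id q" by blast
    have "track w1' a = q" using track_run[of w1' q] a by simp
    then have "track w2' a = q" using tr' a by simp
    then show "run w2' id q = run w1' id q" using run_track[of w2' id a] a by simp
  qed
  have pt2: "\<forall>q\<in>set [1..<Suc n]. run w2' id q \<in> L \<longrightarrow> run w1' id q = run w2' id q"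
  proof (intro ballI impI)
    fix q assume "run w2' id q \<in> L"
    then obtain a where a: "a \<in> L" "a = run w2' id q" by blast
    have "track w2' a = q" using track_run[of w2' q] a by simp
    then have "track w1' a = q" using tr' a by simp
    then show "run w1' id q = run w2' id q" using run_track[of w1' id a] a by simp
  qed
  have F: "FF L n (run w1' id) = FF L n (run w2' id)"
    unfolding FF_def by (rule filter_map_eq[OF pt1 pt2])
  have c1: "cnd (FF L n id) (red L w1' id) (FF L n (run w1' id))"
    using M_lemma[OF w1'(1), of L id] red_pos[OF w1'(2), of L id] cross_distinct[OF w1'(1,3)] L1'
    unfolding cnd_def okw_def by auto
  have c2: "cnd (FF L n id) (red L w2' id) (FF L n (run w1' id))"
    using M_lemma[OF w2'(1), of L id] red_pos[OF w2'(2), of L id] cross_distinct[OF w2'(1,3)] L2' F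
    unfolding cnd_def okw_def by auto
  have m: "braid_eq (card L) (red L w1' id) (red L w2' id)"
    using matsumoto[OF FP(1) c1 c2] FP(3) by simp
  have b1: "braid_eq (card L) (red L w1 id) (red L w1' id)" using w1'(4) L_def L1' unfolding pb_eq_def by simp
  have b2: "braid_eq (card L) (red L w2 id) (red L w2' id)" using w2'(4) L2 L2' unfolding pb_eq_def by simp
  have img: "track w1 ` L = track w2 ` L" using tr by (simp cong: image_cong)
  show ?thesis
    unfolding pb_eq_def using L_def L2 img braid_eq.trans[OF braid_eq.trans[OF b1 m] braid_eq.sym[OF b2]]
    by simp
qed



fun dn :: "nat \<Rightarrow> gen list" where
  "dn 0 = []"
| "dn (Suc j) = (if j = 0 then [] else Sig j # dn j)"

fun up :: "nat \<Rightarrow> gen list" where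
  "up 0 = []"
| "up (Suc j) = (if j = 0 then [] else up j @ [Sig j])"

lemma run_app: "run (u @ v) st = run v (run u st)"
  by (induction u st rule: run.induct) auto

lemma killed_app: "killed (u @ v) st = killed u st \<union> killed v (run u st)"
  by (induction u st rule: run.induct) auto

lemma crossings_app: "crossings (u @ v) st = crossings u st @ crossings v (run u st)"
  by (induction u st rule: run.induct) auto

lemma run_dn: "1 \<le> j \<Longrightarrow> run (dn j) st = (\<lambda>p. if p = 1 then st j else if 2 \<le> p \<and> p \<le> j then st (p - 1) else st p)"
proof (induction j arbitrary: st)
  case 0 then show ?case by simp
next
  case (Suc j)
  show ?case
  proof (cases "j = 0")
    case True then show ?thesis by (auto intro!: ext)
  next
    case False
    then have "run (dn (Suc j)) st = run (dn j) (sw j st)" by simp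
    also have "\<dots> = (\<lambda>p. if p = 1 then sw j st j else if 2 \<le> p \<and> p \<le> j then sw j st (p - 1) else sw j st p)"
      using Suc.IH False by simp
    also have "\<dots> = (\<lambda>p. if p = 1 then st (Suc j) else if 2 \<le> p \<and> p \<le> Suc j then st (p - 1) else st p)"
      using False by (auto intro!: ext simp: sw_def)
    finally show ?thesis .
  qed
qed

lemma run_up: "1 \<le> j \<Longrightarrow> run (up j) st = (\<lambda>p. if p = j then st 1 else if 1 \<le> p \<and> p < j then st (p + 1) else st p)"
proof (induction j arbitrary: st)
  case 0 then show ?case by simp
next
  case (Suc j)
  show ?case
  proof (cases "j = 0")
    case True then show ?thesis by (auto intro!: ext)
  next
    case False
    then have "run (up (Suc j)) st = sw j (run (up j) st)" by (simp add: run_app)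
    also have "\<dots> = sw j (\<lambda>p. if p = j then st 1 else if 1 \<le> p \<and> p < j then st (p + 1) else st p)"
      using Suc.IH False by simp
    also have "\<dots> = (\<lambda>p. if p = Suc j then st 1 else if 1 \<le> p \<and> p < Suc j then st (p + 1) else st p)"
      using False by (auto intro!: ext simp: sw_def)
    finally show ?thesis .
  qed
qed

definition Kj :: "nat \<Rightarrow> gen list" where
  "Kj j = dn j @ Eps # up j"

lemma run_Kj: "1 \<le> j \<Longrightarrow> run (Kj j) id = id"
  unfolding Kj_def by (auto simp: run_app run_dn run_up intro!: ext)

lemma killed_sig: "Eps \<notin> set w \<Longrightarrow> killed w st = {}"
  by (induction w st rule: run.induct) auto

lemma Eps_dn: "Eps \<notin> set (dn j)" by (induction j) auto
lemma Eps_up: "Eps \<notin> set (up j)" by (induction j) auto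

lemma killed_Kj: "1 \<le> j \<Longrightarrow> killed (Kj j) id = {j}"
  unfolding Kj_def by (simp add: killed_app killed_sig Eps_dn Eps_up run_dn)

lemma cross_dn: "\<forall>e\<in>set (crossings (dn j) st). fst e = st j \<or> snd e = st j"
proof (induction j arbitrary: st)
  case 0 then show ?case by simp
next
  case (Suc j)
  show ?case
  proof (cases "j = 0")
    case True then show ?thesis by simp
  next
    case False
    have "\<forall>e\<in>set (crossings (dn j) (sw j st)). fst e = sw j st j \<or> snd e = sw j st j" by (rule Suc.IH)
    then show ?thesis using False by (simp add: sw_def)
  qed
qed

lemma cross_up: "\<forall>e\<in>set (crossings (up j) st). fst e = st 1 \<or> snd e = st 1"
proof (induction j arbitrary: st)
  case 0 then show ?case by simp
next
  case (Suc j)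
  show ?case
  proof (cases "j = 0")
    case True then show ?thesis by simp
  next
    case False
    have "run (up j) st j = st 1" using run_up[of j st] False by simp
    then show ?thesis using Suc.IH False by (simp add: crossings_app)
  qed
qed

lemma cross_Kj: "1 \<le> j \<Longrightarrow> \<forall>e\<in>set (crossings (Kj j) id). fst e = j \<or> snd e = j"
proof -
  assume j: "1 \<le> j"
  have "run (dn j) id 1 = j" using run_dn[OF j, of id] by simp
  then show ?thesis unfolding Kj_def using cross_dn[of j id] cross_up[of j "run (dn j) id"]
    by (auto simp: crossings_app)
qed

lemma valid_dn: "j \<le> n \<Longrightarrow> valid_word n (dn j)"
  by (induction j) (auto simp: valid_word_def)

lemma valid_up: "j \<le> n \<Longrightarrow> valid_word n (up j)"
  by (induction j) (auto simp: valid_word_def)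

lemma valid_app: "valid_word n (u @ v) \<longleftrightarrow> valid_word n u \<and> valid_word n v"
  by (auto simp: valid_word_def)

lemma valid_Kj: "j \<le> n \<Longrightarrow> valid_word n (Kj j)"
  unfolding Kj_def using valid_dn valid_up by (auto simp: valid_app valid_Eps)

lemma pos_dn: "SigInv i \<notin> set (dn j)" by (induction j) auto
lemma pos_up: "SigInv i \<notin> set (up j)" by (induction j) auto


definition KK :: "nat list \<Rightarrow> gen list" where
  "KK ks = concat (map Kj ks)"

lemma KK_facts:
  "\<forall>k\<in>set ks. 1 \<le> k \<and> k \<le> n \<Longrightarrow>
    run (KK ks) id = id \<and> killed (KK ks) id = set ks \<and>
    (\<forall>e\<in>set (crossings (KK ks) id). fst e \<in> set ks \<or> snd e \<in> set ks) \<and>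
    valid_word n (KK ks) \<and> (\<forall>i. SigInv i \<notin> set (KK ks))"
proof (induction ks)
  case Nil then show ?case by (simp add: KK_def valid_word_def)
next
  case (Cons k ks)
  have k: "1 \<le> k" "k \<le> n" using Cons.prems by auto
  have IH: "run (KK ks) id = id \<and> killed (KK ks) id = set ks \<and>
    (\<forall>e\<in>set (crossings (KK ks) id). fst e \<in> set ks \<or> snd e \<in> set ks) \<and>
    valid_word n (KK ks) \<and> (\<forall>i. SigInv i \<notin> set (KK ks))"
  proof (rule Cons.IH)
    show "\<forall>k\<in>set ks. 1 \<le> k \<and> k \<le> n" using Cons.prems by simp
  qed
  have e: "KK (k # ks) = Kj k @ KK ks" by (simp add: KK_def)
  have p: "\<forall>i. SigInv i \<notin> set (Kj k)" using pos_dn pos_up by (simp add: Kj_def)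
  have rK: "run (Kj k) id = id" by (rule run_Kj[OF k(1)])
  have r1: "run (KK (k # ks)) id = id" unfolding e run_app rK using IH by simp
  have r2: "killed (KK (k # ks)) id = set (k # ks)" unfolding e killed_app rK using IH killed_Kj[OF k(1)] by simp
  have r3: "crossings (KK (k # ks)) id = crossings (Kj k) id @ crossings (KK ks) id"
    unfolding e crossings_app rK by simp
  have r4: "\<forall>e\<in>set (crossings (KK (k # ks)) id). fst e \<in> set (k # ks) \<or> snd e \<in> set (k # ks)"
    unfolding r3 using IH cross_Kj[OF k(1)] by auto
  have r5: "valid_word n (KK (k # ks))" unfolding e valid_app using IH valid_Kj[OF k(2)] by simp
  have r6: "\<forall>i. SigInv i \<notin> set (KK (k # ks))" unfolding e using IH p by simp
  show ?case using r1 r2 r4 r5 r6 by blast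
qed

lemma track_id: "run w id = id \<Longrightarrow> track w p = p"
  using run_track[of w id p] by simp

lemma track_app: "track (u @ v) p = track v (track u p)"
  by (induction u p rule: track.induct) auto

lemma rk_full:
  assumes "pm n st" "1 \<le> i" "i < n"
  shows "rk {1..n} st i = i"
proof -
  have "{p. 1 \<le> p \<and> p \<le> i \<and> st p \<in> {1..n}} = {1..i}"
    using assms unfolding pm_def by auto
  then show ?thesis unfolding rk_def by simp
qed

lemma red_full:
  "okw n u \<Longrightarrow> pm n st \<Longrightarrow> red {1..n} (map (\<lambda>l. Sig (fst l)) u) st = u"
proof (induction u arbitrary: st)
  case Nil then show ?case by simp
next
  case (Cons l u)
  obtain r b where l: "l = (r, b)" by (cases l)
  have r: "1 \<le> r" "r < n" "b" using Cons.prems(1) l by (auto simp: okw_def)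
  have u: "okw n u" using Cons.prems(1) by (simp add: okw_def)
  have inr: "st r \<in> {1..n}" "st (Suc r) \<in> {1..n}" using Cons.prems(2) r unfolding pm_def by auto
  show ?case using Cons.IH[OF u pm_sw[OF r(1,2) Cons.prems(2)]] l r inr rk_full[OF Cons.prems(2) r(1,2)]
    by (simp add: red_Sig)
qed

lemma FF_full: assumes "pm n st" shows "FF {1..n} n st = map st [1..<Suc n]"
proof -
  have "\<forall>x\<in>set (map st [1..<Suc n]). x \<in> {1..n}"
  proof
    fix x assume "x \<in> set (map st [1..<Suc n])"
    then obtain p where "p \<in> set [1..<Suc n]" "x = st p" by auto
    then have "p \<in> {1..n}" "x = st p" by auto
    then show "x \<in> {1..n}" using assms unfolding pm_def by blast
  qed
  then show ?thesis unfolding FF_def by (rule filter_True)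
qed

lemma count_from_distinct:
  "distinct (map f xs) \<Longrightarrow> length (filter (\<lambda>x. f x = z) xs) \<le> 1"
proof (induction xs)
  case Nil then show ?case by simp
next
  case (Cons x xs)
  show ?case
  proof (cases "f x = z")
    case True
    have "f x \<notin> f ` set xs" using Cons.prems by simp
    then have "filter (\<lambda>y. f y = z) xs = []" using True by (auto simp: filter_empty_conv image_iff)
    then show ?thesis using True by simp
  next
    case False then show ?thesis using Cons by simp
  qed
qed


lemma perm_ext:
  assumes "partial_perm n s"
  obtains h where "bij_betw h {1..n} {1..n}" "\<And>p q. s p = Some q \<Longrightarrow> q \<in> {1..n} \<and> h q = p"
proof -
  define D where "D = dom s"
  define R where "R = ran s"
  define f where "f p = the (s p)" for p
  have DR: "D \<subseteq> {1..n}" "R \<subseteq> {1..n}" "inj_on s D" using assms unfolding partial_perm_def D_def R_def by auto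
  have sf: "s p = Some (f p)" if "p \<in> D" for p using that unfolding D_def f_def by auto
  have injf: "inj_on f D"
  proof (rule inj_onI)
    fix p q assume "p \<in> D" "q \<in> D" "f p = f q"
    then have "s p = s q" using sf by simp
    then show "p = q" using DR(3) \<open>p \<in> D\<close> \<open>q \<in> D\<close> by (simp add: inj_on_def)
  qed
  have imf: "f ` D = R"
  proof
    show "f ` D \<subseteq> R" using sf unfolding R_def ran_def by auto
    show "R \<subseteq> f ` D"
    proof
      fix q assume "q \<in> R"
      then obtain p where "s p = Some q" unfolding R_def ran_def by blast
      then have "p \<in> D" "f p = q" unfolding D_def f_def by auto
      then show "q \<in> f ` D" by blast
    qed
  qed
  have bf: "bij_betw f D R" using injf imf by (simp add: bij_betw_def)
  have fin: "finite D" "finite R" using DR(1,2) finite_subset by blast+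
  have cDR: "card D = card R" using bij_betw_same_card[OF bf] .
  have "card ({1..n} - R) = card ({1..n} - D)"
    using cDR DR(1,2) fin by (simp add: card_Diff_subset)
  then obtain g where g: "bij_betw g ({1..n} - R) ({1..n} - D)"
    using finite_same_card_bij by (metis finite_Diff finite_atLeastAtMost)
  define h where "h q = (if q \<in> R then inv_into D f q else g q)" for q
  have b1: "bij_betw h R D"
  proof -
    have "bij_betw (inv_into D f) R D" using bij_betw_inv_into[OF bf] .
    then show ?thesis by (rule bij_betw_cong[THEN iffD1, rotated]) (simp add: h_def)
  qed
  have b2: "bij_betw h ({1..n} - R) ({1..n} - D)"
    using g by (rule bij_betw_cong[THEN iffD1, rotated]) (simp add: h_def)
  have "bij_betw h (R \<union> ({1..n} - R)) (D \<union> ({1..n} - D))"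
    by (rule bij_betw_combine[OF b1 b2]) blast
  moreover have "R \<union> ({1..n} - R) = {1..n}" "D \<union> ({1..n} - D) = {1..n}" using DR by auto
  ultimately have bh: "bij_betw h {1..n} {1..n}" by simp
  have hp: "q \<in> {1..n} \<and> h q = p" if "s p = Some q" for p q
  proof -
    have pD: "p \<in> D" using that unfolding D_def by auto
    have fp: "f p = q" using that unfolding f_def by simp
    have qR: "q \<in> R" using imf pD fp by blast
    then show ?thesis using DR(2) h_def inv_into_f_f[OF injf pD] fp by auto
  qed
  show ?thesis using that bh hp by blast
qed

lemma part2:
  assumes ps: "partial_perm n s"
  shows "\<exists>w. valid_word n w \<and> in_IBn_plus n w \<and> tau n w = s"
proof -
  obtain h where bh: "bij_betw h {1..n} {1..n}" and hp: "\<And>p q. s p = Some q \<Longrightarrow> q \<in> {1..n} \<and> h q = p"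
    using perm_ext[OF ps] by blast
  define D where "D = dom s"
  have Dn: "D \<subseteq> {1..n}" using ps unfolding partial_perm_def D_def by simp
  define xs where "xs = [1..<Suc n]"
  define ys where "ys = map h xs"
  have sxs: "set xs = {1..n}" unfolding xs_def by auto
  have dxs: "distinct xs" unfolding xs_def by simp
  have lxs: "length xs = n" unfolding xs_def by simp
  have dys: "distinct ys" unfolding ys_def using bh sxs dxs by (simp add: distinct_map bij_betw_def)
  have sys: "set ys = set xs" unfolding ys_def using bh sxs by (simp add: bij_betw_def)
  obtain u where u: "okw n u" "distinct (clB xs u)" "runB xs u = ys"
    using EX[OF dxs dys sys[symmetric]] lxs by auto
  define P where "P = map (\<lambda>l. Sig (fst l)) u"
  have vP: "valid_word n P" using u(1) unfolding P_def okw_def valid_word_def by auto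
  have nP: "\<forall>i. SigInv i \<notin> set P" "Eps \<notin> set P" unfolding P_def by auto
  have rP: "red {1..n} P id = u" unfolding P_def by (rule red_full[OF u(1) pm_id])
  have FFid: "FF {1..n} n id = xs" using FF_full[OF pm_id] unfolding xs_def by simp
  note M = M_lemma[OF vP, of "{1..n}" id]
  have runP: "map (run P id) xs = ys"
    using M rP FFid u(3) FF_full[OF pm_run[OF vP pm_id]] unfolding xs_def by simp
  have runPq: "run P id q = h q" if "q \<in> {1..n}" for q
  proof -
    have "q \<in> set xs" using that sxs by simp
    then show ?thesis using runP unfolding ys_def by simp
  qed
  have clP: "clB xs u = map (\<lambda>(x, y). {x, y}) (filter (\<lambda>(x, y). x \<in> {1..n} \<and> y \<in> {1..n}) (crossings P id))"
    using M rP FFid by simp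
  define ks where "ks = sorted_list_of_set ({1..n} - D)"
  have sks: "set ks = {1..n} - D" unfolding ks_def by simp
  have kr: "\<forall>k\<in>set ks. 1 \<le> k \<and> k \<le> n" using sks by auto
  note KF = KK_facts[OF kr]
  define w where "w = KK ks @ P"
  have vw: "valid_word n w" unfolding w_def valid_app using KF vP by simp
  have pw: "positive_word w" unfolding w_def positive_word_def using KF nP by simp
  have kw: "killed w id = set ks" unfolding w_def killed_app using KF killed_sig[OF nP(2)] by simp
  have lw: "live n w = D" unfolding live_def kw sks using Dn by auto
  have tw: "track w p = track P p" for p unfolding w_def track_app using KF track_id by simp
  have cw: "crossings w id = crossings (KK ks) id @ crossings P id"
    unfolding w_def crossings_app using KF by simp
  have cam: "crosses_at_most_once n w"
    unfolding crosses_at_most_once_def lw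
  proof (intro ballI impI)
    fix a b assume ab: "a \<in> D" "b \<in> D" "a \<noteq> b"
    define Q where "Q = (\<lambda>(x::nat, y::nat). {x, y} = {a, b})"
    have "filter Q (crossings (KK ks) id) = []"
    proof -
      have "\<not> Q e" if "e \<in> set (crossings (KK ks) id)" for e
      proof
        assume "Q e"
        then have "fst e \<in> {a, b}" "snd e \<in> {a, b}" unfolding Q_def by (auto split: prod.splits)
        then show False using KF that sks ab by auto
      qed
      then show ?thesis by (simp add: filter_empty_conv)
    qed
    moreover have "length (filter Q (crossings P id)) \<le> 1"
    proof -
      define B where "B = (\<lambda>(x::nat, y::nat). x \<in> {1..n} \<and> y \<in> {1..n})"
      have "filter Q (crossings P id) = filter (\<lambda>e. (\<lambda>(x, y). {x, y}) e = {a, b}) (filter B (crossings P id))"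
        unfolding filter_filter
      proof (rule filter_cong[OF HOL.refl])
        fix e assume "e \<in> set (crossings P id)"
        show "Q e = (B e \<and> (\<lambda>e. (\<lambda>(x, y). {x, y}) e = {a, b}) e)"
          unfolding Q_def B_def using ab Dn by (auto split: prod.splits simp: doubleton_eq_iff)
      qed
      moreover have "distinct (map (\<lambda>(x, y). {x, y}) (filter B (crossings P id)))"
        using u(2) clP unfolding B_def by simp
      ultimately show ?thesis using count_from_distinct by metis
    qed
    ultimately show "length (filter (\<lambda>(x, y). {x, y} = {a, b}) (crossings w id)) \<le> 1"
      unfolding cw Q_def by simp
  qed
  have ib: "in_IBn_plus n w"
    unfolding in_IBn_plus_def pb_eq_def using vw pw cam braid_eq.refl by blast
  have tau: "tau n w = s"
  proof (rule ext)
    fix p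
    show "tau n w p = s p"
    proof (cases "p \<in> D")
      case True
      then obtain q where q: "s p = Some q" unfolding D_def by auto
      have qn: "q \<in> {1..n}" "h q = p" using hp[OF q] by auto
      have "run P id q = p" using runPq[OF qn(1)] qn(2) by simp
      then have "track P p = q" using track_run[of P q] by simp
      then show ?thesis unfolding tau_def using lw True tw q by simp
    next
      case False
      then show ?thesis unfolding tau_def using lw D_def by auto
    qed
  qed
  show ?thesis using vw ib tau by blast
qed


theorem mainTheorem1:
  fixes n :: nat
  assumes "n \<ge> 1"
  shows "(\<forall>w1 w2. valid_word n w1 \<longrightarrow> valid_word n w2 \<longrightarrow>
            in_IBn_plus n w1 \<longrightarrow> in_IBn_plus n w2 \<longrightarrow>
            tau n w1 = tau n w2 \<longrightarrow> pb_eq n w1 w2)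
       \<and> (\<forall>s. partial_perm n s \<longrightarrow> (\<exists>w. valid_word n w \<and> in_IBn_plus n w \<and> tau n w = s))"
  using part1 part2 by blast

end
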